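(* Let $(A,\Delta)$ and $(B,\Delta)$ be regular multiplier Hopf algebras forming a non-degenerate dual pair and let $R$ be a left $A$-module algebra. Then the map $B\otimes (R\# A)\to R\# A$, $b\otimes (x\# a)\mapsto x\#(b\triangleright a)=\sum\langle a_{(2)},b\rangle\, x\# a_{(1)}$ makes the smash product $R\# A$ into a left $B$-module algebra.
   Context: Algebras are over $\mathbb C$, possibly without identity, with non-degenerate product; $M(\cdot)$ is the multiplier algebra. A regular multiplier Hopf algebra is a pair $(A,\Delta)$ with $\Delta:A\to M(A\otimes A)$ a coassociative homomorphism such that $\Delta(a)(1\otimes b),(a\otimes 1)\Delta(b),\Delta(a)(b\otimes 1),(1\otimes a)\Delta(b)\in A\otimes A$, the maps $a\otimes b\mapsto\Delta(a)(1\otimes b)$, $a\otimes b\mapsto(a\otimes 1)\Delta(b)$ are bijective, and likewise for the flipped comultiplication; it has counit $\varepsilon$ and bijective antipode $S$; Sweedler notation is used with legs covered. A non-degenerate dual pair: a non-degenerate bilinear form $\langle\cdot,\cdot\rangle:A\times B\to\mathbb C$ such that for all $a\in A,b\in B$ the multipliers $b\triangleright a=\sum\langle a_{(2)},b\rangle a_{(1)}$ and $a\triangleleft b=\sum\langle a_{(1)},b\rangle a_{(2)}$ lie in $A$, $a\triangleright b=\sum\langle a,b_{(2)}\rangle b_{(1)}$ and $b\triangleleft a=\sum\langle a,b_{(1)}\rangle b_{(2)}$ lie in $B$, with $\langle b\triangleright a,b'\rangle=\langle a,b'b\rangle$, $\langle a\triangleleft b,b'\rangle=\langle a,bb'\rangle$,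 $\langle a',a\triangleright b\rangle=\langle a'a,b\rangle$, $\langle a',b\triangleleft a\rangle=\langle aa',b\rangle$, and these four actions are unital. A left $A$-module $R$ is unital if $AR=R$. A left $A$-module algebra is an algebra $R$ with non-degenerate product which is a unital left $A$-module satisfying $a(xx')=\sum(a_{(1)}x)(a_{(2)}x')$ for $a\in A$, $x,x'\in R$. The smash product $R\# A$ is $R\otimes A$ (elements $x\# a$) with product $(x\# a)(x'\# a')=\sum x(a_{(1)}x')\# a_{(2)}a'$. *)

theory Defs
  imports Complex_Main
begin

section \<open>Complex vector spaces and algebras (possibly without unit)\<close>

class cvec = ab_group_add +
  fixes cscale :: "complex \<Rightarrow> 'a \<Rightarrow> 'a"
  assumes cscale_add_right: "cscale c (x + y) = cscale c x + cscale c y"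
    and cscale_add_left: "cscale (c + d) x = cscale c x + cscale d x"
    and cscale_cscale: "cscale c (cscale d x) = cscale (c * d) x"
    and cscale_one: "cscale 1 x = x"

instantiation complex :: cvec
begin
definition cscale_complex :: "complex \<Rightarrow> complex \<Rightarrow> complex" where
  "cscale_complex c z = c * z"
instance by standard (auto simp: cscale_complex_def algebra_simps)
end

definition clinear :: "('a::cvec \<Rightarrow> 'b::cvec) \<Rightarrow> bool" where
  "clinear f \<longleftrightarrow> (\<forall>x y. f (x + y) = f x + f y) \<and> (\<forall>c x. f (cscale c x) = cscale c (f x))"

definition cbilinear :: "('a::cvec \<Rightarrow> 'b::cvec \<Rightarrow> 'c::cvec) \<Rightarrow> bool" where
  "cbilinear F \<longleftrightarrow> (\<forall>x. clinear (F x)) \<and> (\<forall>y. clinear (\<lambda>x. F x y))"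

definition is_alg :: "('a::cvec \<Rightarrow> 'a \<Rightarrow> 'a) \<Rightarrow> bool" where
  "is_alg m \<longleftrightarrow> cbilinear m \<and> (\<forall>x y z. m (m x y) z = m x (m y z))"

definition nondeg :: "('a::cvec \<Rightarrow> 'a \<Rightarrow> 'a) \<Rightarrow> bool" where
  "nondeg m \<longleftrightarrow> (\<forall>x. (\<forall>y. m x y = 0) \<longrightarrow> x = 0) \<and> (\<forall>x. (\<forall>y. m y x = 0) \<longrightarrow> x = 0)"

section \<open>Algebraic tensor product V \<otimes> W\<close>

text \<open>An element \<open>\<Sum> v_i \<otimes> w_i\<close> is represented faithfully by the bilinear form
  \<open>(f,g) \<mapsto> \<Sum> f(v_i) g(w_i)\<close> on pairs of linear functionals (these separate V \<otimes> W).\<close>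

definition tfun :: "('a::cvec \<times> 'b::cvec) list \<Rightarrow> ('a \<Rightarrow> complex) \<times> ('b \<Rightarrow> complex) \<Rightarrow> complex" where
  "tfun xs = (\<lambda>(f, g). if clinear f \<and> clinear g then (\<Sum>(v, w)\<leftarrow>xs. f v * g w) else 0)"

typedef (overloaded) ('a::cvec, 'b::cvec) tensor = "range (tfun :: ('a \<times> 'b) list \<Rightarrow> _)"
  by auto

setup_lifting type_definition_tensor

lemma clinear_neg: "clinear f \<Longrightarrow> f (- x) = - f x"
  unfolding clinear_def by (metis add_right_cancel add.left_inverse add.right_neutral add.left_neutral
      diff_0 diff_add_cancel eq_neg_iff_add_eq_0)

lemma tfun_append: "tfun (xs @ ys) = (\<lambda>p. tfun xs p + tfun ys p)"
  by (auto simp: tfun_def fun_eq_iff)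

lemma tfun_neg: "tfun (map (\<lambda>(v, w). (- v, w)) xs) = (\<lambda>p. - tfun xs p)"
proof -
  have "clinear f \<Longrightarrow> (\<Sum>(v, w)\<leftarrow>map (\<lambda>(v, w). (- v, w)) xs. f v * g w) = - (\<Sum>(v, w)\<leftarrow>xs. f v * g w)"
    for f :: "'a \<Rightarrow> complex" and g :: "'b \<Rightarrow> complex"
    by (induction xs) (auto simp: clinear_neg)
  then show ?thesis by (auto simp: tfun_def fun_eq_iff)
qed

lemma tfun_scale: "tfun (map (\<lambda>(v, w). (cscale c v, w)) xs) = (\<lambda>p. c * tfun xs p)"
proof -
  have "clinear f \<Longrightarrow> (\<Sum>(v, w)\<leftarrow>map (\<lambda>(v, w). (cscale c v, w)) xs. f v * g w) = c * (\<Sum>(v, w)\<leftarrow>xs. f v * g w)"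
    for f :: "'a \<Rightarrow> complex" and g :: "'b \<Rightarrow> complex"
    by (induction xs) (auto simp: clinear_def cscale_complex_def algebra_simps)
  then show ?thesis by (auto simp: tfun_def fun_eq_iff)
qed

instantiation tensor :: (cvec, cvec) cvec
begin
lift_definition zero_tensor :: "('a, 'b) tensor" is "tfun []" by auto
lift_definition plus_tensor :: "('a, 'b) tensor \<Rightarrow> ('a, 'b) tensor \<Rightarrow> ('a, 'b) tensor"
  is "\<lambda>\<phi> \<psi> p. \<phi> p + \<psi> p" by (auto simp flip: tfun_append)
lift_definition uminus_tensor :: "('a, 'b) tensor \<Rightarrow> ('a, 'b) tensor"
  is "\<lambda>\<phi> p. - \<phi> p" by (auto simp flip: tfun_neg)
lift_definition minus_tensor :: "('a, 'b) tensor \<Rightarrow> ('a, 'b) tensor \<Rightarrow> ('a, 'b) tensor"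
  is "\<lambda>\<phi> \<psi> p. \<phi> p - \<psi> p"
proof -
  fix \<phi> \<psi> :: "('a \<Rightarrow> complex) \<times> ('b \<Rightarrow> complex) \<Rightarrow> complex"
  assume "\<phi> \<in> range tfun" "\<psi> \<in> range tfun"
  then obtain xs ys where "\<phi> = tfun xs" "\<psi> = tfun ys" by auto
  then have "(\<lambda>p. \<phi> p - \<psi> p) = tfun (xs @ map (\<lambda>(v, w). (- v, w)) ys)"
    by (simp add: tfun_append tfun_neg)
  then show "(\<lambda>p. \<phi> p - \<psi> p) \<in> range tfun" by auto
qed
lift_definition cscale_tensor :: "complex \<Rightarrow> ('a, 'b) tensor \<Rightarrow> ('a, 'b) tensor"
  is "\<lambda>c \<phi> p. c * \<phi> p" by (auto simp flip: tfun_scale)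
instance
proof
  have z: "tfun [] = (\<lambda>p. 0)" by (auto simp: tfun_def)
  show "a + b + c = a + (b + c)" for a b c :: "('a, 'b) tensor"
    by transfer (simp add: add.assoc)
  show "a + b = b + a" for a b :: "('a, 'b) tensor"
    by transfer (simp add: add.commute)
  show "0 + a = a" for a :: "('a, 'b) tensor"
    by transfer (simp add: z)
  show "- a + a = 0" for a :: "('a, 'b) tensor"
    by transfer (simp add: z)
  show "a - b = a + - b" for a b :: "('a, 'b) tensor"
    by transfer simp
  show "cscale c (x + y) = cscale c x + cscale c y" for c and x y :: "('a, 'b) tensor"
    by transfer (simp add: algebra_simps)
  show "cscale (c + d) x = cscale c x + cscale d x" for c d and x :: "('a, 'b) tensor"
    by transfer (simp add: algebra_simps)
  show "cscale c (cscale d x) = cscale (c * d) x" for c d and x :: "('a, 'b) tensor"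
    by transfer (simp add: algebra_simps)
  show "cscale 1 x = x" for x :: "('a, 'b) tensor"
    by transfer simp
qed
end

lift_definition tprod :: "'a::cvec \<Rightarrow> 'b::cvec \<Rightarrow> ('a, 'b) tensor" is "\<lambda>v w. tfun [(v, w)]"
  by auto

text \<open>A chosen representation \<open>t = \<Sum> v_i \<otimes> w_i\<close>, and the induced linear map
  \<open>v \<otimes> w \<mapsto> F v w\<close> for a bilinear \<open>F\<close> (independent of the representation when \<open>F\<close> is bilinear).\<close>
definition trep :: "('a::cvec, 'b::cvec) tensor \<Rightarrow> ('a \<times> 'b) list" where
  "trep t = (SOME xs. Rep_tensor t = tfun xs)"

definition tapply :: "('a::cvec \<Rightarrow> 'b::cvec \<Rightarrow> 'c::cvec) \<Rightarrow> ('a, 'b) tensor \<Rightarrow> 'c" where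
  "tapply F t = (\<Sum>(v, w)\<leftarrow>trep t. F v w)"

definition tflip :: "('a::cvec, 'b::cvec) tensor \<Rightarrow> ('b, 'a) tensor" where
  "tflip = tapply (\<lambda>v w. tprod w v)"

definition tassoc :: "('a::cvec, ('b::cvec, 'c::cvec) tensor) tensor \<Rightarrow> (('a, 'b) tensor, 'c) tensor" where
  "tassoc = tapply (\<lambda>u s. tapply (\<lambda>v w. tprod (tprod u v) w) s)"

definition tmul :: "('a::cvec \<Rightarrow> 'a \<Rightarrow> 'a) \<Rightarrow> ('b::cvec \<Rightarrow> 'b \<Rightarrow> 'b)
    \<Rightarrow> ('a, 'b) tensor \<Rightarrow> ('a, 'b) tensor \<Rightarrow> ('a, 'b) tensor" where
  "tmul m1 m2 s t = tapply (\<lambda>v w. tapply (\<lambda>v' w'. tprod (m1 v v') (m2 w w')) t) s"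

section \<open>Multipliers\<close>

text \<open>A multiplier of an algebra \<open>(X, m)\<close> is a pair \<open>(L, R)\<close>, \<open>L x = M x\<close>, \<open>R x = x M\<close>.\<close>
type_synonym 'x multiplier = "('x \<Rightarrow> 'x) \<times> ('x \<Rightarrow> 'x)"

definition is_multiplier :: "('x::cvec \<Rightarrow> 'x \<Rightarrow> 'x) \<Rightarrow> 'x multiplier \<Rightarrow> bool" where
  "is_multiplier m M \<longleftrightarrow> (\<forall>x y. fst M (m x y) = m (fst M x) y \<and> snd M (m x y) = m x (snd M y)
      \<and> m x (fst M y) = m (snd M x) y)"

definition mult_of :: "('x \<Rightarrow> 'x \<Rightarrow> 'x) \<Rightarrow> 'x \<Rightarrow> 'x multiplier" where
  "mult_of m t = (m t, \<lambda>x. m x t)"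

definition mcomp :: "'x multiplier \<Rightarrow> 'x multiplier \<Rightarrow> 'x multiplier" where
  "mcomp M N = (fst M \<circ> fst N, snd N \<circ> snd M)"

definition madd :: "'x::plus multiplier \<Rightarrow> 'x multiplier \<Rightarrow> 'x multiplier" where
  "madd M N = ((\<lambda>x. fst M x + fst N x), (\<lambda>x. snd M x + snd N x))"

definition mscale :: "complex \<Rightarrow> 'x::cvec multiplier \<Rightarrow> 'x multiplier" where
  "mscale c M = ((\<lambda>x. cscale c (fst M x)), (\<lambda>x. cscale c (snd M x)))"

definition in_alg :: "('x \<Rightarrow> 'x \<Rightarrow> 'x) \<Rightarrow> 'x multiplier \<Rightarrow> bool" where
  "in_alg m M \<longleftrightarrow> (\<exists>t. M = mult_of m t)"

definition elem_of :: "('x \<Rightarrow> 'x \<Rightarrow> 'x) \<Rightarrow> 'x multiplier \<Rightarrow> 'x" where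
  "elem_of m M = (SOME t. M = mult_of m t)"

section \<open>Regular multiplier Hopf algebras\<close>

type_synonym 'a comult = "'a \<Rightarrow> ('a, 'a) tensor multiplier"

definition one_ten :: "('a::cvec \<Rightarrow> 'a \<Rightarrow> 'a) \<Rightarrow> 'a \<Rightarrow> ('a, 'a) tensor multiplier" where
  "one_ten m b = (tapply (\<lambda>p q. tprod p (m b q)), tapply (\<lambda>p q. tprod p (m q b)))"

definition ten_one :: "('a::cvec \<Rightarrow> 'a \<Rightarrow> 'a) \<Rightarrow> 'a \<Rightarrow> ('a, 'a) tensor multiplier" where
  "ten_one m b = (tapply (\<lambda>p q. tprod (m b p) q), tapply (\<lambda>p q. tprod (m p b) q))"

text \<open>The four covered products (as multipliers of \<open>A \<otimes> A\<close>):
  \<open>\<Delta>(a)(1\<otimes>b)\<close>, \<open>(a\<otimes>1)\<Delta>(b)\<close>, \<open>\<Delta>(a)(b\<otimes>1)\<close>, \<open>(1\<otimes>a)\<Delta>(b)\<close>.\<close>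
definition M1 :: "('a::cvec \<Rightarrow> 'a \<Rightarrow> 'a) \<Rightarrow> 'a comult \<Rightarrow> 'a \<Rightarrow> 'a \<Rightarrow> ('a, 'a) tensor multiplier" where
  "M1 m \<Delta> a b = mcomp (\<Delta> a) (one_ten m b)"
definition M2 :: "('a::cvec \<Rightarrow> 'a \<Rightarrow> 'a) \<Rightarrow> 'a comult \<Rightarrow> 'a \<Rightarrow> 'a \<Rightarrow> ('a, 'a) tensor multiplier" where
  "M2 m \<Delta> a b = mcomp (ten_one m a) (\<Delta> b)"
definition M3 :: "('a::cvec \<Rightarrow> 'a \<Rightarrow> 'a) \<Rightarrow> 'a comult \<Rightarrow> 'a \<Rightarrow> 'a \<Rightarrow> ('a, 'a) tensor multiplier" where
  "M3 m \<Delta> a b = mcomp (\<Delta> a) (ten_one m b)"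
definition M4 :: "('a::cvec \<Rightarrow> 'a \<Rightarrow> 'a) \<Rightarrow> 'a comult \<Rightarrow> 'a \<Rightarrow> 'a \<Rightarrow> ('a, 'a) tensor multiplier" where
  "M4 m \<Delta> a b = mcomp (one_ten m a) (\<Delta> b)"

text \<open>The corresponding elements of \<open>A \<otimes> A\<close> (meaningful when the multipliers lie in \<open>A \<otimes> A\<close>).\<close>
definition cov1 :: "('a::cvec \<Rightarrow> 'a \<Rightarrow> 'a) \<Rightarrow> 'a comult \<Rightarrow> 'a \<Rightarrow> 'a \<Rightarrow> ('a, 'a) tensor" where
  "cov1 m \<Delta> a b = elem_of (tmul m m) (M1 m \<Delta> a b)"
definition cov2 :: "('a::cvec \<Rightarrow> 'a \<Rightarrow> 'a) \<Rightarrow> 'a comult \<Rightarrow> 'a \<Rightarrow> 'a \<Rightarrow> ('a, 'a) tensor" where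
  "cov2 m \<Delta> a b = elem_of (tmul m m) (M2 m \<Delta> a b)"
definition cov3 :: "('a::cvec \<Rightarrow> 'a \<Rightarrow> 'a) \<Rightarrow> 'a comult \<Rightarrow> 'a \<Rightarrow> 'a \<Rightarrow> ('a, 'a) tensor" where
  "cov3 m \<Delta> a b = elem_of (tmul m m) (M3 m \<Delta> a b)"
definition cov4 :: "('a::cvec \<Rightarrow> 'a \<Rightarrow> 'a) \<Rightarrow> 'a comult \<Rightarrow> 'a \<Rightarrow> 'a \<Rightarrow> ('a, 'a) tensor" where
  "cov4 m \<Delta> a b = elem_of (tmul m m) (M4 m \<Delta> a b)"

definition regular_mha :: "('a::cvec \<Rightarrow> 'a \<Rightarrow> 'a) \<Rightarrow> 'a comult \<Rightarrow> bool" where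
  "regular_mha m \<Delta> \<longleftrightarrow>
     is_alg m \<and> nondeg m
   \<comment> \<open>\<open>\<Delta> : A \<rightarrow> M(A \<otimes> A)\<close> is a homomorphism\<close>
   \<and> (\<forall>a. is_multiplier (tmul m m) (\<Delta> a))
   \<and> (\<forall>a b. \<Delta> (a + b) = madd (\<Delta> a) (\<Delta> b))
   \<and> (\<forall>c a. \<Delta> (cscale c a) = mscale c (\<Delta> a))
   \<and> (\<forall>a b. \<Delta> (m a b) = mcomp (\<Delta> a) (\<Delta> b))
   \<comment> \<open>covered products lie in \<open>A \<otimes> A\<close>\<close>
   \<and> (\<forall>a b. in_alg (tmul m m) (M1 m \<Delta> a b) \<and> in_alg (tmul m m) (M2 m \<Delta> a b)
          \<and> in_alg (tmul m m) (M3 m \<Delta> a b) \<and> in_alg (tmul m m) (M4 m \<Delta> a b))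
   \<comment> \<open>coassociativity: \<open>(a\<otimes>1\<otimes>1)(\<Delta>\<otimes>\<iota>)(\<Delta>(b)(1\<otimes>c)) = (\<iota>\<otimes>\<Delta>)((a\<otimes>1)\<Delta>(b))(1\<otimes>1\<otimes>c)\<close>\<close>
   \<and> (\<forall>a b c. tapply (\<lambda>p q. tprod (cov2 m \<Delta> a p) q) (cov1 m \<Delta> b c)
             = tassoc (tapply (\<lambda>u v. tprod u (cov1 m \<Delta> v c)) (cov2 m \<Delta> a b)))
   \<comment> \<open>bijectivity of \<open>a\<otimes>b \<mapsto> \<Delta>(a)(1\<otimes>b)\<close>, \<open>a\<otimes>b \<mapsto> (a\<otimes>1)\<Delta>(b)\<close>\<close>
   \<and> bij (tapply (cov1 m \<Delta>)) \<and> bij (tapply (cov2 m \<Delta>))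
   \<comment> \<open>same for \<open>\<Delta>^cop = \<sigma>\<Delta>\<close>: \<open>\<Delta>^cop(a)(1\<otimes>b) = \<sigma>(\<Delta>(a)(b\<otimes>1))\<close>, \<open>(a\<otimes>1)\<Delta>^cop(b) = \<sigma>((1\<otimes>a)\<Delta>(b))\<close>\<close>
   \<and> bij (tapply (\<lambda>a b. tflip (cov3 m \<Delta> a b))) \<and> bij (tapply (\<lambda>a b. tflip (cov4 m \<Delta> a b)))"

section \<open>Modules and module algebras\<close>

definition left_module :: "('a::cvec \<Rightarrow> 'a \<Rightarrow> 'a) \<Rightarrow> ('a \<Rightarrow> 'r::cvec \<Rightarrow> 'r) \<Rightarrow> bool" where
  "left_module m act \<longleftrightarrow> cbilinear act \<and> (\<forall>a a' x. act (m a a') x = act a (act a' x))"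

definition unital_action :: "('a \<Rightarrow> 'r::cvec \<Rightarrow> 'r) \<Rightarrow> bool" where
  "unital_action act \<longleftrightarrow> (\<forall>x. \<exists>ps. x = (\<Sum>(a, y)\<leftarrow>ps. act a y))"

text \<open>Left module algebra; \<open>a(xx') = \<Sum>(a_(1)x)(a_(2)x')\<close> with legs covered by writing
  \<open>x' = \<Sum> c_j y_j\<close> and using \<open>\<Delta>(a)(1\<otimes>c_j) \<in> A \<otimes> A\<close>.\<close>
definition module_algebra :: "('a::cvec \<Rightarrow> 'a \<Rightarrow> 'a) \<Rightarrow> 'a comult
    \<Rightarrow> ('r::cvec \<Rightarrow> 'r \<Rightarrow> 'r) \<Rightarrow> ('a \<Rightarrow> 'r \<Rightarrow> 'r) \<Rightarrow> bool" where
  "module_algebra m \<Delta> mR act \<longleftrightarrow>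
     is_alg mR \<and> nondeg mR \<and> left_module m act \<and> unital_action act
   \<and> (\<forall>a x cs. act a (mR x (\<Sum>(c, y)\<leftarrow>cs. act c y))
        = (\<Sum>(c, y)\<leftarrow>cs. tapply (\<lambda>p q. mR (act p x) (act q y)) (cov1 m \<Delta> a c)))"

section \<open>Dual pairs\<close>

text \<open>\<open>b \<triangleright> a = \<Sum>\<langle>a_(2),b\<rangle>a_(1)\<close> as a multiplier of A: \<open>(b\<triangleright>a)c\<close> computed from \<open>\<Delta>(a)(c\<otimes>1)\<close>,
  \<open>c(b\<triangleright>a)\<close> from \<open>(c\<otimes>1)\<Delta>(a)\<close>.\<close>
definition ractM :: "('a::cvec \<Rightarrow> 'a \<Rightarrow> 'a) \<Rightarrow> 'a comult \<Rightarrow> ('a \<Rightarrow> 'b \<Rightarrow> complex)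
    \<Rightarrow> 'b \<Rightarrow> 'a \<Rightarrow> 'a multiplier" where
  "ractM m \<Delta> pr b a = (\<lambda>c. tapply (\<lambda>p q. cscale (pr q b) p) (cov3 m \<Delta> a c),
                       \<lambda>c. tapply (\<lambda>p q. cscale (pr q b) p) (cov2 m \<Delta> c a))"

text \<open>\<open>a \<triangleleft> b = \<Sum>\<langle>a_(1),b\<rangle>a_(2)\<close>: from \<open>\<Delta>(a)(1\<otimes>c)\<close> and \<open>(1\<otimes>c)\<Delta>(a)\<close>.\<close>
definition lactM :: "('a::cvec \<Rightarrow> 'a \<Rightarrow> 'a) \<Rightarrow> 'a comult \<Rightarrow> ('a \<Rightarrow> 'b \<Rightarrow> complex)
    \<Rightarrow> 'a \<Rightarrow> 'b \<Rightarrow> 'a multiplier" where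
  "lactM m \<Delta> pr a b = (\<lambda>c. tapply (\<lambda>p q. cscale (pr p b) q) (cov1 m \<Delta> a c),
                       \<lambda>c. tapply (\<lambda>p q. cscale (pr p b) q) (cov4 m \<Delta> c a))"

definition tri_BA :: "('a::cvec \<Rightarrow> 'a \<Rightarrow> 'a) \<Rightarrow> 'a comult \<Rightarrow> ('a \<Rightarrow> 'b \<Rightarrow> complex) \<Rightarrow> 'b \<Rightarrow> 'a \<Rightarrow> 'a"
  where "tri_BA mA \<Delta>A pr b a = elem_of mA (ractM mA \<Delta>A pr b a)"
definition tle_AB :: "('a::cvec \<Rightarrow> 'a \<Rightarrow> 'a) \<Rightarrow> 'a comult \<Rightarrow> ('a \<Rightarrow> 'b \<Rightarrow> complex) \<Rightarrow> 'a \<Rightarrow> 'b \<Rightarrow> 'a"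
  where "tle_AB mA \<Delta>A pr a b = elem_of mA (lactM mA \<Delta>A pr a b)"
definition tri_AB :: "('b::cvec \<Rightarrow> 'b \<Rightarrow> 'b) \<Rightarrow> 'b comult \<Rightarrow> ('a \<Rightarrow> 'b \<Rightarrow> complex) \<Rightarrow> 'a \<Rightarrow> 'b \<Rightarrow> 'b"
  where "tri_AB mB \<Delta>B pr a b = elem_of mB (ractM mB \<Delta>B (\<lambda>x y. pr y x) a b)"   \<comment> \<open>\<open>a \<triangleright> b = \<Sum>\<langle>a,b_(2)\<rangle>b_(1)\<close>\<close>
definition tle_BA :: "('b::cvec \<Rightarrow> 'b \<Rightarrow> 'b) \<Rightarrow> 'b comult \<Rightarrow> ('a \<Rightarrow> 'b \<Rightarrow> complex) \<Rightarrow> 'b \<Rightarrow> 'a \<Rightarrow> 'b"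
  where "tle_BA mB \<Delta>B pr b a = elem_of mB (lactM mB \<Delta>B (\<lambda>x y. pr y x) b a)"   \<comment> \<open>\<open>b \<triangleleft> a = \<Sum>\<langle>a,b_(1)\<rangle>b_(2)\<close>\<close>

definition dual_pair :: "('a::cvec \<Rightarrow> 'a \<Rightarrow> 'a) \<Rightarrow> 'a comult \<Rightarrow> ('b::cvec \<Rightarrow> 'b \<Rightarrow> 'b) \<Rightarrow> 'b comult
    \<Rightarrow> ('a \<Rightarrow> 'b \<Rightarrow> complex) \<Rightarrow> bool" where
  "dual_pair mA \<Delta>A mB \<Delta>B pr \<longleftrightarrow>
     cbilinear pr
   \<and> (\<forall>a. (\<forall>b. pr a b = 0) \<longrightarrow> a = 0) \<and> (\<forall>b. (\<forall>a. pr a b = 0) \<longrightarrow> b = 0)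
   \<and> (\<forall>a b. in_alg mA (ractM mA \<Delta>A pr b a) \<and> in_alg mA (lactM mA \<Delta>A pr a b)
          \<and> in_alg mB (ractM mB \<Delta>B (\<lambda>x y. pr y x) a b) \<and> in_alg mB (lactM mB \<Delta>B (\<lambda>x y. pr y x) b a))
   \<and> (\<forall>a b b'. pr (tri_BA mA \<Delta>A pr b a) b' = pr a (mB b' b))
   \<and> (\<forall>a b b'. pr (tle_AB mA \<Delta>A pr a b) b' = pr a (mB b b'))
   \<and> (\<forall>a a' b. pr a' (tri_AB mB \<Delta>B pr a b) = pr (mA a' a) b)
   \<and> (\<forall>a a' b. pr a' (tle_BA mB \<Delta>B pr b a) = pr (mA a a') b)
   \<and> unital_action (tri_BA mA \<Delta>A pr) \<and> unital_action (\<lambda>b a. tle_AB mA \<Delta>A pr a b)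
   \<and> unital_action (tri_AB mB \<Delta>B pr) \<and> unital_action (\<lambda>a b. tle_BA mB \<Delta>B pr b a)"

section \<open>Smash product\<close>

text \<open>\<open>(x#a)(x'#a') = \<Sum> x(a_(1)x') # a_(2)a'\<close>, covered via \<open>\<Delta>(a)(1\<otimes>a')\<close>, extended bilinearly.\<close>
definition smash_mult :: "('a::cvec \<Rightarrow> 'a \<Rightarrow> 'a) \<Rightarrow> 'a comult \<Rightarrow> ('r::cvec \<Rightarrow> 'r \<Rightarrow> 'r)
    \<Rightarrow> ('a \<Rightarrow> 'r \<Rightarrow> 'r) \<Rightarrow> ('r, 'a) tensor \<Rightarrow> ('r, 'a) tensor \<Rightarrow> ('r, 'a) tensor" where
  "smash_mult mA \<Delta>A mR act X Y =
     tapply (\<lambda>x a. tapply (\<lambda>x' a'. tapply (\<lambda>p q. tprod (mR x (act p x')) q) (cov1 mA \<Delta>A a a')) Y) X"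

definition smash_act :: "('a::cvec \<Rightarrow> 'a \<Rightarrow> 'a) \<Rightarrow> 'a comult \<Rightarrow> ('a \<Rightarrow> 'b \<Rightarrow> complex)
    \<Rightarrow> 'b \<Rightarrow> ('r::cvec, 'a) tensor \<Rightarrow> ('r, 'a) tensor" where
  "smash_act mA \<Delta>A pr b X = tapply (\<lambda>x a. tprod x (tri_BA mA \<Delta>A pr b a)) X"

end

theory Submission
  imports Defs
begin

interpretation cvs: vector_space "cscale :: complex \<Rightarrow> 'a::cvec \<Rightarrow> 'a"
  apply unfold_locales
     apply (rule cscale_add_right)
    apply (rule cscale_add_left)
   apply (rule cscale_cscale)
  apply (rule cscale_one)
  done

lemma cscale_0r[simp]: "cscale c (0::'a::cvec) = 0" by (rule cvs.scale_zero_right)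
lemma cscale_0l[simp]: "cscale 0 (x::'a::cvec) = 0" by (rule cvs.scale_zero_left)
lemma cscale_1[simp]: "cscale 1 (x::'a::cvec) = x" by (rule cscale_one)
lemma cscale_minus_r: "cscale c (- x::'a::cvec) = - cscale c x" by (rule cvs.scale_minus_right)
lemma cscale_diff_r: "cscale c (x - y::'a::cvec) = cscale c x - cscale c y" by (rule cvs.scale_right_diff_distrib)
lemma cscale_sum_list: "cscale c (sum_list (map f xs)::'a::cvec) = sum_list (map (\<lambda>x. cscale c (f x)) xs)"
  by (induction xs) (simp_all add: cscale_add_right)
lemma cscale_sum_list_left: "cscale (sum_list (map f xs)) (v::'a::cvec) = sum_list (map (\<lambda>x. cscale (f x) v) xs)"
  by (induction xs) (simp_all add: cscale_add_left)
lemma cscale_complex[simp]: "cscale c (z::complex) = c * z" by (simp add: cscale_complex_def)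

lemma clinearI: "(\<And>x y. f (x + y) = f x + f y) \<Longrightarrow> (\<And>c x. f (cscale c x) = cscale c (f x)) \<Longrightarrow> clinear f"
  by (simp add: clinear_def)
lemma clinear_add: "clinear f \<Longrightarrow> f (x + y) = f x + f y" by (simp add: clinear_def)
lemma clinear_scale: "clinear f \<Longrightarrow> f (cscale c x) = cscale c (f x)" by (simp add: clinear_def)
lemma clinear_linear: "clinear (f::'a::cvec \<Rightarrow> 'b::cvec) \<longleftrightarrow> Vector_Spaces.linear cscale cscale f"
  by (auto simp: clinear_def Vector_Spaces.linear_iff cvs.vector_space_axioms)
lemma clinear_0: "clinear f \<Longrightarrow> f 0 = 0"
proof -
  assume f: "clinear f"
  have "f (0+0) = f 0 + f 0" by (rule clinear_add[OF f])
  then show ?thesis by simp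
qed
lemma clinear_minus: "clinear f \<Longrightarrow> f (- x) = - f x" by (rule clinear_neg)
lemma clinear_diff: "clinear f \<Longrightarrow> f (x - y) = f x - f y"
  using clinear_add[of f x "-y"] clinear_neg[of f y] by simp
lemma clinear_sum_list: "clinear f \<Longrightarrow> f (sum_list (map g xs)) = sum_list (map (\<lambda>x. f (g x)) xs)"
  by (induction xs) (simp_all add: clinear_0 clinear_add)
lemma clinear_sum: "clinear f \<Longrightarrow> f (sum g A) = sum (\<lambda>x. f (g x)) A"
  by (induction A rule: infinite_finite_induct) (simp_all add: clinear_0 clinear_add)
lemma clinear_id[simp]: "clinear (\<lambda>x. x)" by (simp add: clinear_def)
lemma clinear_comp: "clinear f \<Longrightarrow> clinear g \<Longrightarrow> clinear (\<lambda>x. f (g x))" by (simp add: clinear_def)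

lemma clinear_fun_add: "clinear f \<Longrightarrow> clinear g \<Longrightarrow> clinear (\<lambda>x. f x + g x)"
  by (simp add: clinear_def cscale_add_right)
lemma clinear_fun_scale: "clinear f \<Longrightarrow> clinear (\<lambda>x. cscale c (f x))"
  by (simp add: clinear_def cscale_add_right cscale_cscale mult.commute)
lemma clinear_zero_fun[simp]: "clinear (\<lambda>x. 0)" by (simp add: clinear_def)
lemma clinear_scalar_mult: "clinear f \<Longrightarrow> clinear (\<lambda>x. cscale (f x) (v::'b::cvec))"
  by (simp add: clinear_def cscale_add_left cscale_cscale)
lemma clinear_sum_list_fun: "(\<And>x. x \<in> set xs \<Longrightarrow> clinear (g x)) \<Longrightarrow> clinear (\<lambda>v. sum_list (map (\<lambda>x. g x v) xs))"
  by (induction xs) (auto intro!: clinear_fun_add)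

lemma sum_list_0: "(\<Sum>x\<leftarrow>xs. (0::'a::monoid_add)) = 0" by (induction xs) simp_all

lemma fin_coord:
  fixes S :: "'a::cvec set"
  assumes "finite S"
  shows "\<exists>ps. (\<forall>p\<in>set ps. clinear (fst p)) \<and> (\<forall>v\<in>S. v = (\<Sum>(f, e)\<leftarrow>ps. cscale (f v) e))"
proof -
  interpret P: vector_space_pair "cscale :: complex \<Rightarrow> 'a \<Rightarrow> 'a" "cscale :: complex \<Rightarrow> complex \<Rightarrow> complex"
    by unfold_locales (simp_all add: cscale_add_right cscale_add_left cscale_cscale algebra_simps)
  interpret Q: vector_space_pair "cscale :: complex \<Rightarrow> 'a \<Rightarrow> 'a" "cscale :: complex \<Rightarrow> 'a \<Rightarrow> 'a"
    by unfold_locales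
  obtain B where B: "B \<subseteq> S" "cvs.independent B" "S \<subseteq> cvs.span B"
    using cvs.maximal_independent_subset by blast
  have fB: "finite B" using B(1) assms finite_subset by blast
  define crd where "crd b = P.construct B (\<lambda>x. if x = b then 1 else 0)" for b
  have lin: "clinear (crd b)" for b
    unfolding crd_def clinear_linear using P.linear_construct[OF B(2)] by simp
  obtain bl where bl: "set bl = B" "distinct bl" using fB finite_distinct_list by blast
  define ps where "ps = map (\<lambda>b. (crd b, b)) bl"
  have l2: "clinear (\<lambda>v. (\<Sum>(f, e)\<leftarrow>ps. cscale (f v) e))"
    unfolding ps_def map_map o_def split_beta fst_conv snd_conv
    by (rule clinear_sum_list_fun, rule clinear_scalar_mult, rule lin)
  have main: "v = (\<Sum>(f, e)\<leftarrow>ps. cscale (f v) e)" if "v \<in> cvs.span B" for v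
  proof -
    have "(\<lambda>v. v) v = (\<lambda>v. (\<Sum>(f, e)\<leftarrow>ps. cscale (f v) e)) v"
    proof (rule Q.linear_eq_on[OF _ _ that])
      show "Vector_Spaces.linear cscale cscale (\<lambda>v::'a. v)" using clinear_linear clinear_id by blast
      show "Vector_Spaces.linear cscale cscale (\<lambda>v. (\<Sum>(f, e)\<leftarrow>ps. cscale (f v) e))"
        using l2 clinear_linear by blast
      fix b assume b: "b \<in> B"
      have c: "crd b' b = (if b' = b then 1 else 0)" if "b' \<in> B" for b'
        unfolding crd_def using P.construct_basis[OF B(2) b] by auto
      have "(\<Sum>(f, e)\<leftarrow>ps. cscale (f b) e) = (\<Sum>b'\<leftarrow>bl. cscale (crd b' b) b')"
        by (simp add: ps_def o_def)
      also have "\<dots> = (\<Sum>b'\<in>B. cscale (crd b' b) b')"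
        using bl by (simp add: sum_list_distinct_conv_sum_set)
      also have "\<dots> = (\<Sum>b'\<in>B. if b' = b then b else 0)"
        by (rule sum.cong) (auto simp: c)
      also have "\<dots> = b" using b fB by simp
      finally show "b = (\<Sum>(f, e)\<leftarrow>ps. cscale (f b) e)" by simp
    qed
    then show ?thesis by simp
  qed
  moreover have "\<forall>p\<in>set ps. clinear (fst p)" using lin by (auto simp: ps_def)
  ultimately show ?thesis using B(3) by blast
qed

lemma separation:
  fixes v :: "'a::cvec"
  assumes "\<And>f::'a \<Rightarrow> complex. clinear f \<Longrightarrow> f v = 0"
  shows "v = 0"
proof -
  obtain ps where ps: "\<forall>p\<in>set ps. clinear (fst p)" "v = (\<Sum>(f, e)\<leftarrow>ps. cscale (f v) e)"
    using fin_coord[of "{v}"] by auto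
  have "(\<Sum>(f, e)\<leftarrow>ps. cscale (f v) e) = (\<Sum>p\<leftarrow>ps. (0::'a))"
    by (rule arg_cong[where f=sum_list], rule map_cong) (use ps(1) assms in \<open>auto simp: split_beta\<close>)
  then show ?thesis using ps(2) sum_list_0[of ps] by simp
qed

lemma exists_functional:
  fixes v :: "'a::cvec"
  assumes "v \<noteq> 0"
  shows "\<exists>f::'a \<Rightarrow> complex. clinear f \<and> f v = 1"
proof -
  obtain f :: "'a \<Rightarrow> complex" where f: "clinear f" "f v \<noteq> 0" using separation assms by blast
  then show ?thesis
    by (intro exI[of _ "\<lambda>x. f x / f v"]) (auto simp: clinear_def add_divide_distrib)
qed


named_theorems lin

lemma cbilinearI: "(\<And>v. clinear (F v)) \<Longrightarrow> (\<And>w. clinear (\<lambda>v. F v w)) \<Longrightarrow> cbilinear F"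
  by (simp add: cbilinear_def)
lemma cbilinear_l: "cbilinear F \<Longrightarrow> clinear (\<lambda>v. F v w)" by (simp add: cbilinear_def)
lemma cbilinear_r: "cbilinear F \<Longrightarrow> clinear (F v)" by (simp add: cbilinear_def)
lemma cbilinear_r': "cbilinear F \<Longrightarrow> clinear (\<lambda>w. F v w)" by (simp add: cbilinear_def)

lemma sum_list_swap: "(\<Sum>x\<leftarrow>xs. \<Sum>y\<leftarrow>ys. f x y) = (\<Sum>y\<leftarrow>ys. \<Sum>x\<leftarrow>xs. f x y::'a::comm_monoid_add)"
  by (induction xs) (simp_all add: sum_list_addf)

lemma sum_list_cong: "(\<And>x. x \<in> set xs \<Longrightarrow> f x = g x) \<Longrightarrow> sum_list (map f xs) = sum_list (map g xs)"
  by (simp cong: map_cong)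

lemma sum_list_split_cong: "(\<And>a b. (a, b) \<in> set xs \<Longrightarrow> f a b = g a b) \<Longrightarrow> (\<Sum>(a, b)\<leftarrow>xs. f a b) = (\<Sum>(a, b)\<leftarrow>xs. g a b)"
  by (rule sum_list_cong) auto

definition tsum :: "('a::cvec \<times> 'b::cvec) list \<Rightarrow> ('a, 'b) tensor" where
  "tsum xs = (\<Sum>(v, w)\<leftarrow>xs. tprod v w)"

lemma Rep_tsum: "Rep_tensor (tsum xs) = tfun xs"
proof (induction xs)
  case Nil
  then show ?case by (simp add: tsum_def zero_tensor.rep_eq)
next
  case (Cons p xs)
  obtain v w where p: "p = (v, w)" by fastforce
  have "tsum (p # xs) = tprod v w + tsum xs" by (simp add: tsum_def p)
  then show ?case using Cons
    by (simp add: plus_tensor.rep_eq tprod.rep_eq tfun_append[of "[(v,w)]" xs, simplified] p)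
qed

lemma trep: "Rep_tensor t = tfun (trep t)"
  unfolding trep_def by (rule someI_ex) (use Rep_tensor[of t] in auto)

lemma tsum_trep[simp]: "tsum (trep t) = t"
  using Rep_tensor_inject[of "tsum (trep t)" t] Rep_tsum[of "trep t"] trep[of t] by simp

lemma tensor_eqI_Rep: "(\<And>f g. clinear f \<Longrightarrow> clinear g \<Longrightarrow> Rep_tensor s (f, g) = Rep_tensor t (f, g)) \<Longrightarrow> s = t"
proof -
  assume a: "\<And>f g. clinear f \<Longrightarrow> clinear g \<Longrightarrow> Rep_tensor s (f, g) = Rep_tensor t (f, g)"
  have "Rep_tensor s = Rep_tensor t"
  proof
    fix p :: "('a \<Rightarrow> complex) \<times> ('b \<Rightarrow> complex)"
    obtain f g where p: "p = (f, g)" by fastforce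
    show "Rep_tensor s p = Rep_tensor t p"
      using a[of f g] by (cases "clinear f \<and> clinear g") (auto simp: p trep[of s] trep[of t] tfun_def)
  qed
  then show ?thesis using Rep_tensor_inject by blast
qed

lemma Rep_tensor_eval: "clinear f \<Longrightarrow> clinear g \<Longrightarrow> Rep_tensor t (f, g) = (\<Sum>(v, w)\<leftarrow>trep t. f v * g w)"
  by (simp add: trep tfun_def)

lemma tfun_eq_sum:
  fixes F :: "'a::cvec \<Rightarrow> 'b::cvec \<Rightarrow> 'c::cvec"
  assumes F: "cbilinear F" and eq: "tfun xs = tfun ys"
  shows "(\<Sum>(v, w)\<leftarrow>xs. F v w) = (\<Sum>(v, w)\<leftarrow>ys. F v w)"
proof -
  have scal: "(\<Sum>(v, w)\<leftarrow>xs. \<phi> v w) = (\<Sum>(v, w)\<leftarrow>ys. \<phi> v w)" if phi: "cbilinear \<phi>" for \<phi> :: "'a \<Rightarrow> 'b \<Rightarrow> complex"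
  proof -
    obtain ps where ps: "\<forall>p\<in>set ps. clinear (fst p)" "\<forall>v\<in>fst ` set (xs @ ys). v = (\<Sum>(f, e)\<leftarrow>ps. cscale (f v) e)"
      using fin_coord[of "fst ` set (xs @ ys)"] by auto
    have expand: "(\<Sum>(v, w)\<leftarrow>zs. \<phi> v w) = (\<Sum>(f, e)\<leftarrow>ps. tfun zs (f, \<phi> e))" if zs: "set zs \<subseteq> set (xs @ ys)" for zs
    proof -
      have "(\<Sum>(v, w)\<leftarrow>zs. \<phi> v w) = (\<Sum>(v, w)\<leftarrow>zs. \<Sum>(f, e)\<leftarrow>ps. f v * \<phi> e w)"
      proof (rule sum_list_split_cong)
        fix v w assume "(v, w) \<in> set zs"
        then have v: "v = (\<Sum>(f, e)\<leftarrow>ps. cscale (f v) e)" using ps(2) zs by force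
        have "\<phi> v w = \<phi> (\<Sum>(f, e)\<leftarrow>ps. cscale (f v) e) w" using v by simp
        also have "\<dots> = (\<Sum>(f, e)\<leftarrow>ps. \<phi> (cscale (f v) e) w)"
          using clinear_sum_list[OF cbilinear_l[OF phi, of w], of "\<lambda>(f, e). cscale (f v) e" ps]
          by (simp add: split_def)
        also have "\<dots> = (\<Sum>(f, e)\<leftarrow>ps. f v * \<phi> e w)"
          using clinear_scale[OF cbilinear_l[OF phi, of w]] by (simp add: split_def)
        finally show "\<phi> v w = (\<Sum>(f, e)\<leftarrow>ps. f v * \<phi> e w)" .
      qed
      also have "\<dots> = (\<Sum>(f, e)\<leftarrow>ps. \<Sum>(v, w)\<leftarrow>zs. f v * \<phi> e w)"
        by (simp add: split_def sum_list_swap[of _ zs ps])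
      also have "\<dots> = (\<Sum>(f, e)\<leftarrow>ps. tfun zs (f, \<phi> e))"
        using ps(1) cbilinear_r[OF phi] by (intro sum_list_split_cong) (auto simp: tfun_def)
      finally show ?thesis .
    qed
    show ?thesis using expand[of xs] expand[of ys] eq by simp
  qed
  show ?thesis
  proof (rule ccontr)
    assume ne: "\<not> ?thesis"
    let ?d = "(\<Sum>(v, w)\<leftarrow>xs. F v w) - (\<Sum>(v, w)\<leftarrow>ys. F v w)"
    have "?d \<noteq> 0" using ne by simp
    then obtain h :: "'c \<Rightarrow> complex" where h: "clinear h" "h ?d \<noteq> 0"
      using separation by blast
    have bil: "cbilinear (\<lambda>v w. h (F v w))"
    proof (rule cbilinearI)
      show "clinear (\<lambda>w. h (F v w))" for v using clinear_comp[OF h(1) cbilinear_r[OF F]] .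
      show "clinear (\<lambda>v. h (F v w))" for w using clinear_comp[OF h(1) cbilinear_l[OF F]] .
    qed
    have "h ?d = h (\<Sum>(v, w)\<leftarrow>xs. F v w) - h (\<Sum>(v, w)\<leftarrow>ys. F v w)"
      by (rule clinear_diff[OF h(1)])
    also have "\<dots> = (\<Sum>(v, w)\<leftarrow>xs. h (F v w)) - (\<Sum>(v, w)\<leftarrow>ys. h (F v w))"
      by (simp only: clinear_sum_list[OF h(1)] split_def)
    also have "\<dots> = 0" using scal[OF bil] by simp
    finally show False using h(2) by simp
  qed
qed

lemma tapply_tsum: "cbilinear F \<Longrightarrow> tapply F (tsum xs) = (\<Sum>(v, w)\<leftarrow>xs. F v w)"
  unfolding tapply_def by (rule tfun_eq_sum) (auto simp: trep[symmetric] Rep_tsum)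

lemma tapply_def': "tapply F t = (\<Sum>(v, w)\<leftarrow>trep t. F v w)" by (simp add: tapply_def)

lemma tprod_add_l: "tprod (v + v') w = tprod v w + tprod v' w"
  by (rule tensor_eqI_Rep) (simp add: plus_tensor.rep_eq tprod.rep_eq tfun_def clinear_add algebra_simps)
lemma tprod_add_r: "tprod v (w + w') = tprod v w + tprod v w'"
  by (rule tensor_eqI_Rep) (simp add: plus_tensor.rep_eq tprod.rep_eq tfun_def clinear_add algebra_simps)
lemma tprod_scale_l: "tprod (cscale c v) w = cscale c (tprod v w)"
  by (rule tensor_eqI_Rep) (simp add: cscale_tensor.rep_eq tprod.rep_eq tfun_def clinear_scale algebra_simps)
lemma tprod_scale_r: "tprod v (cscale c w) = cscale c (tprod v w)"
  by (rule tensor_eqI_Rep) (simp add: cscale_tensor.rep_eq tprod.rep_eq tfun_def clinear_scale algebra_simps)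

lemma cbilinear_tprod[lin]: "cbilinear tprod"
  by (auto intro!: cbilinearI clinearI simp: tprod_add_l tprod_add_r tprod_scale_l tprod_scale_r)

lemma tsum_Cons: "tsum ((v, w) # xs) = tprod v w + tsum xs" by (simp add: tsum_def)
lemma tsum_append: "tsum (xs @ ys) = tsum xs + tsum ys" by (simp add: tsum_def)
lemma tsum_Nil: "tsum [] = 0" by (simp add: tsum_def)

lemma tapply_tprod[simp]: "cbilinear F \<Longrightarrow> tapply F (tprod v w) = F v w"
  using tapply_tsum[of F "[(v, w)]"] by (simp add: tsum_def)

lemma tapply_add: "cbilinear F \<Longrightarrow> tapply F (s + t) = tapply F s + tapply F t"
proof -
  assume F: "cbilinear F"
  have "tapply F (s + t) = tapply F (tsum (trep s @ trep t))" by (simp add: tsum_append)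
  also have "\<dots> = (\<Sum>(v, w)\<leftarrow>trep s @ trep t. F v w)" by (rule tapply_tsum[OF F])
  also have "\<dots> = tapply F s + tapply F t" by (simp add: tapply_def)
  finally show ?thesis .
qed

lemma tsum_scale: "tsum (map (\<lambda>(v, w). (cscale c v, w)) xs) = cscale c (tsum xs)"
  by (induction xs) (auto simp: tsum_def tprod_scale_l cscale_add_right)

lemma tapply_scale: "cbilinear F \<Longrightarrow> tapply F (cscale c t) = cscale c (tapply F t)"
proof -
  assume F: "cbilinear F"
  have "tapply F (cscale c t) = tapply F (tsum (map (\<lambda>(v, w). (cscale c v, w)) (trep t)))"
    by (simp add: tsum_scale)
  also have "\<dots> = (\<Sum>(v, w)\<leftarrow>trep t. F (cscale c v) w)"
    using F by (simp add: tapply_tsum o_def split_def)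
  also have "\<dots> = (\<Sum>(v, w)\<leftarrow>trep t. cscale c (F v w))"
    using clinear_scale[OF cbilinear_l[OF F]] by (simp add: split_def)
  also have "\<dots> = cscale c (tapply F t)"
    by (simp add: tapply_def cscale_sum_list split_def)
  finally show ?thesis .
qed

lemma clinear_tapply[lin]: "cbilinear F \<Longrightarrow> clinear (tapply F)"
  by (simp add: clinearI tapply_add tapply_scale)

lemma tapply_zero[simp]: "cbilinear F \<Longrightarrow> tapply F 0 = 0"
  using clinear_0[OF clinear_tapply] by blast

lemma tapply_sum_list: "cbilinear F \<Longrightarrow> tapply F (sum_list (map g xs)) = sum_list (map (\<lambda>x. tapply F (g x)) xs)"
  using clinear_sum_list[OF clinear_tapply] by blast

lemma linear_tapply_outer: "clinear L \<Longrightarrow> L (tapply F t) = tapply (\<lambda>v w. L (F v w)) t"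
  by (simp add: tapply_def clinear_sum_list split_def)

lemma tapply_tapply: "cbilinear G \<Longrightarrow> tapply G (tapply H t) = tapply (\<lambda>v w. tapply G (H v w)) t"
  by (rule linear_tapply_outer[OF clinear_tapply])

lemma tapply_fun_add: "tapply (\<lambda>v w. F v w + G v w) t = tapply F t + tapply G t"
  by (simp add: tapply_def split_def sum_list_addf)

lemma tapply_fun_scale: "tapply (\<lambda>v w. cscale c (F v w)) t = cscale c (tapply F t)"
  by (simp add: tapply_def split_def cscale_sum_list)

lemma tapply_fun_0[simp]: "tapply (\<lambda>v w. 0) t = 0"
  by (simp add: tapply_def split_def sum_list_0)

lemma clinear_tapply_param[lin]: "(\<And>v w. clinear (\<lambda>x. F x v w)) \<Longrightarrow> clinear (\<lambda>x. tapply (F x) t)"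
  by (simp add: tapply_def clinear_sum_list_fun split_def)

lemma tapply_swap: "tapply (\<lambda>x a. tapply (\<lambda>b c. H x a b c) U) X = tapply (\<lambda>b c. tapply (\<lambda>x a. H x a b c) X) U"
  unfolding tapply_def by (simp add: split_def sum_list_swap[of _ "trep X"])

lemma tensor_expand: "t = (\<Sum>(v, w)\<leftarrow>trep t. tprod v w)"
  using tsum_trep[of t] by (simp add: tsum_def)

lemma tapply_tprod_id: "tapply tprod t = t"
  using tensor_expand[of t] by (simp add: tapply_def)

lemma tensor_ext_linear:
  assumes "clinear L" "clinear M" "\<And>v w. L (tprod v w) = M (tprod v w)"
  shows "L t = M t"
proof -
  have "L t = L (\<Sum>(v, w)\<leftarrow>trep t. tprod v w)" using tensor_expand[of t] by simp
  also have "\<dots> = (\<Sum>(v, w)\<leftarrow>trep t. L (tprod v w))"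
    using clinear_sum_list[OF assms(1), of "\<lambda>(v, w). tprod v w"] by (simp add: split_def)
  also have "\<dots> = (\<Sum>(v, w)\<leftarrow>trep t. M (tprod v w))" using assms(3) by simp
  also have "\<dots> = M (\<Sum>(v, w)\<leftarrow>trep t. tprod v w)"
    using clinear_sum_list[OF assms(2), of "\<lambda>(v, w). tprod v w"] by (simp add: split_def)
  also have "\<dots> = M t" using tensor_expand[of t] by simp
  finally show ?thesis .
qed

section \<open>Slices\<close>

definition lslice :: "('b::cvec \<Rightarrow> complex) \<Rightarrow> ('a::cvec, 'b) tensor \<Rightarrow> 'a" where
  "lslice g t = tapply (\<lambda>v w. cscale (g w) v) t"
definition rslice :: "('a::cvec \<Rightarrow> complex) \<Rightarrow> ('a, 'b::cvec) tensor \<Rightarrow> 'b" where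
  "rslice f t = tapply (\<lambda>v w. cscale (f v) w) t"

lemma cbilinear_lslice_fun[lin]: "clinear g \<Longrightarrow> cbilinear (\<lambda>v w. cscale (g w) v)"
  by (auto intro!: cbilinearI clinearI simp: cscale_add_right cscale_add_left clinear_add clinear_scale cscale_cscale mult.commute)
lemma cbilinear_rslice_fun[lin]: "clinear f \<Longrightarrow> cbilinear (\<lambda>v w. cscale (f v) w)"
  by (auto intro!: cbilinearI clinearI simp: cscale_add_right cscale_add_left clinear_add clinear_scale cscale_cscale mult.commute)

lemma clinear_lslice[lin]: "clinear g \<Longrightarrow> clinear (lslice g)"
  unfolding lslice_def by (intro lin)
lemma clinear_rslice[lin]: "clinear f \<Longrightarrow> clinear (rslice f)"
  unfolding rslice_def by (intro lin)
lemma lslice_tprod[simp]: "clinear g \<Longrightarrow> lslice g (tprod v w) = cscale (g w) v"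
  unfolding lslice_def by (rule tapply_tprod, rule cbilinear_lslice_fun)
lemma rslice_tprod[simp]: "clinear f \<Longrightarrow> rslice f (tprod v w) = cscale (f v) w"
  unfolding rslice_def by (rule tapply_tprod, rule cbilinear_rslice_fun)

lemma tensor_eq_lslices:
  fixes s t :: "('a::cvec, 'b::cvec) tensor"
  assumes "\<And>g. clinear g \<Longrightarrow> lslice g s = lslice g t"
  shows "s = t"
proof (rule tensor_eqI_Rep)
  fix f :: "'a \<Rightarrow> complex" and g :: "'b \<Rightarrow> complex" assume f: "clinear f" and g: "clinear g"
  have *: "Rep_tensor u (f, g) = f (lslice g u)" for u
    unfolding Rep_tensor_eval[OF f g] lslice_def tapply_def
    by (simp add: clinear_sum_list[OF f] split_def clinear_scale[OF f] mult.commute)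
  show "Rep_tensor s (f, g) = Rep_tensor t (f, g)" using assms[OF g] by (simp add: *)
qed

lemma tensor_eq_rslices:
  fixes s t :: "('a::cvec, 'b::cvec) tensor"
  assumes "\<And>f. clinear f \<Longrightarrow> rslice f s = rslice f t"
  shows "s = t"
proof (rule tensor_eqI_Rep)
  fix f :: "'a \<Rightarrow> complex" and g :: "'b \<Rightarrow> complex" assume f: "clinear f" and g: "clinear g"
  have *: "Rep_tensor u (f, g) = g (rslice f u)" for u
    unfolding Rep_tensor_eval[OF f g] rslice_def tapply_def
    by (simp add: clinear_sum_list[OF g] split_def clinear_scale[OF g])
  show "Rep_tensor s (f, g) = Rep_tensor t (f, g)" using assms[OF f] by (simp add: *)
qed

lemma lslice_0[simp]: "clinear g \<Longrightarrow> lslice g 0 = 0"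
  unfolding lslice_def by (rule tapply_zero, rule cbilinear_lslice_fun)
lemma rslice_0[simp]: "clinear f \<Longrightarrow> rslice f 0 = 0"
  unfolding rslice_def by (rule tapply_zero, rule cbilinear_rslice_fun)
lemma tensor_zero_lslices: "(\<And>g. clinear g \<Longrightarrow> lslice g s = 0) \<Longrightarrow> s = 0"
  by (rule tensor_eq_lslices) simp
lemma tensor_zero_rslices: "(\<And>f. clinear f \<Longrightarrow> rslice f s = 0) \<Longrightarrow> s = 0"
  by (rule tensor_eq_rslices) simp

lemma cbilinear_tprod_comp[lin]: "clinear P \<Longrightarrow> clinear Q \<Longrightarrow> cbilinear (\<lambda>v w. tprod (P v) (Q w))"
  by (auto intro!: cbilinearI clinearI simp: clinear_add clinear_scale tprod_add_l tprod_add_r tprod_scale_l tprod_scale_r)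

lemma tensor_inj_left:
  fixes Z :: "('a::cvec, 'b::cvec) tensor" and \<Phi> :: "'i \<Rightarrow> 'a \<Rightarrow> 'c::cvec"
  assumes lin: "\<And>i. clinear (\<Phi> i)" and inj: "\<And>v. (\<And>i. \<Phi> i v = 0) \<Longrightarrow> v = 0"
    and z: "\<And>i. tapply (\<lambda>v w. tprod (\<Phi> i v) w) Z = 0"
  shows "Z = 0"
proof (rule tensor_zero_lslices)
  fix g :: "'b \<Rightarrow> complex" assume g: "clinear g"
  show "lslice g Z = 0"
  proof (rule inj)
    fix i
    have "\<Phi> i (lslice g Z) = lslice g (tapply (\<lambda>v w. tprod (\<Phi> i v) w) Z)"
      unfolding lslice_def
      by (simp add: linear_tapply_outer[OF lin] tapply_tapply[OF cbilinear_lslice_fun[OF g]]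
          clinear_scale[OF lin] cbilinear_lslice_fun[OF g] cbilinear_tprod)
    also have "\<dots> = 0" using z clinear_0[OF clinear_lslice[OF g]] by simp
    finally show "\<Phi> i (lslice g Z) = 0" .
  qed
qed

lemma tensor_inj_right:
  fixes Z :: "('a::cvec, 'b::cvec) tensor" and \<Phi> :: "'i \<Rightarrow> 'b \<Rightarrow> 'c::cvec"
  assumes lin: "\<And>i. clinear (\<Phi> i)" and inj: "\<And>v. (\<And>i. \<Phi> i v = 0) \<Longrightarrow> v = 0"
    and z: "\<And>i. tapply (\<lambda>v w. tprod v (\<Phi> i w)) Z = 0"
  shows "Z = 0"
proof (rule tensor_zero_rslices)
  fix f :: "'a \<Rightarrow> complex" assume f: "clinear f"
  show "rslice f Z = 0"
  proof (rule inj)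
    fix i
    have "\<Phi> i (rslice f Z) = rslice f (tapply (\<lambda>v w. tprod v (\<Phi> i w)) Z)"
      unfolding rslice_def
      by (simp add: linear_tapply_outer[OF lin] tapply_tapply[OF cbilinear_rslice_fun[OF f]]
          clinear_scale[OF lin] cbilinear_rslice_fun[OF f] cbilinear_tprod)
    also have "\<dots> = 0" using z clinear_0[OF clinear_rslice[OF f]] by simp
    finally show "\<Phi> i (rslice f Z) = 0" .
  qed
qed


lemma tapply_cong: "(\<And>v w. F v w = G v w) \<Longrightarrow> tapply F t = tapply G t"
  by (simp add: tapply_def)

lemma clinear_tprod_l[lin]: "clinear (\<lambda>v. tprod v w)"
  using cbilinear_l[OF cbilinear_tprod] .
lemma clinear_tprod_r[lin]: "clinear (\<lambda>w. tprod v w)"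
  using cbilinear_r'[OF cbilinear_tprod] .
lemma clinear_tprod_lc[lin]: "clinear P \<Longrightarrow> clinear (\<lambda>v. tprod (P v) w)"
  by (rule clinear_comp[OF clinear_tprod_l])
lemma clinear_tprod_rc[lin]: "clinear P \<Longrightarrow> clinear (\<lambda>w. tprod v (P w))"
  by (rule clinear_comp[OF clinear_tprod_r])

lemma tprod_0l[simp]: "tprod 0 w = 0" using clinear_0[OF clinear_tprod_l] .
lemma tprod_0r[simp]: "tprod v 0 = 0" using clinear_0[OF clinear_tprod_r] .

locale nalg =
  fixes m :: "'a::cvec \<Rightarrow> 'a \<Rightarrow> 'a"
  assumes alg: "is_alg m" and nd: "nondeg m"
begin

lemma bil[lin]: "cbilinear m" using alg by (simp add: is_alg_def)
lemma assoc: "m (m x y) z = m x (m y z)" using alg by (simp add: is_alg_def)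
lemma lin_l[lin]: "clinear (\<lambda>x. m x y)" by (rule cbilinear_l[OF bil])
lemma lin_r[lin]: "clinear (m x)" by (rule cbilinear_r[OF bil])
lemma lin_r'[lin]: "clinear (\<lambda>y. m x y)" by (rule cbilinear_r[OF bil])
lemma add_l: "m (x + x') y = m x y + m x' y" by (rule clinear_add[OF lin_l])
lemma add_r: "m x (y + y') = m x y + m x y'" by (rule clinear_add[OF lin_r])
lemma scale_l: "m (cscale c x) y = cscale c (m x y)" by (rule clinear_scale[OF lin_l])
lemma scale_r: "m x (cscale c y) = cscale c (m x y)" by (rule clinear_scale[OF lin_r])
lemma zero_l[simp]: "m 0 y = 0" by (rule clinear_0[OF lin_l])
lemma zero_r[simp]: "m x 0 = 0" by (rule clinear_0[OF lin_r])
lemma diff_l: "m (x - x') y = m x y - m x' y" by (rule clinear_diff[OF lin_l])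
lemma diff_r: "m x (y - y') = m x y - m x y'" by (rule clinear_diff[OF lin_r])

lemma nd_l: "(\<And>y. m x y = 0) \<Longrightarrow> x = 0" using nd unfolding nondeg_def by blast
lemma nd_r: "(\<And>y. m y x = 0) \<Longrightarrow> x = 0" using nd unfolding nondeg_def by blast
lemma eq_by_right: "(\<And>y. m x y = m x' y) \<Longrightarrow> x = x'"
  using nd_l[of "x - x'"] by (simp add: diff_l)
lemma eq_by_left: "(\<And>y. m y x = m y x') \<Longrightarrow> x = x'"
  using nd_r[of "x - x'"] by (simp add: diff_r)

abbreviation tm :: "('a, 'a) tensor \<Rightarrow> ('a, 'a) tensor \<Rightarrow> ('a, 'a) tensor" where "tm \<equiv> tmul m m"

definition L0 :: "'a \<Rightarrow> ('a, 'a) tensor \<Rightarrow> ('a, 'a) tensor" where "L0 c X = tapply (\<lambda>p q. tprod (m c p) q) X"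
definition R0 :: "'a \<Rightarrow> ('a, 'a) tensor \<Rightarrow> ('a, 'a) tensor" where "R0 c X = tapply (\<lambda>p q. tprod (m p c) q) X"
definition L1 :: "'a \<Rightarrow> ('a, 'a) tensor \<Rightarrow> ('a, 'a) tensor" where "L1 c X = tapply (\<lambda>p q. tprod p (m c q)) X"
definition R1 :: "'a \<Rightarrow> ('a, 'a) tensor \<Rightarrow> ('a, 'a) tensor" where "R1 c X = tapply (\<lambda>p q. tprod p (m q c)) X"

lemma bil_L0[lin]: "cbilinear (\<lambda>p q. tprod (m c p) q)" by (intro lin clinear_id)
lemma bil_R0[lin]: "cbilinear (\<lambda>p q. tprod (m p c) q)" by (intro lin clinear_id)
lemma bil_L1[lin]: "cbilinear (\<lambda>p q. tprod p (m c q))" by (intro lin clinear_id)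
lemma bil_R1[lin]: "cbilinear (\<lambda>p q. tprod p (m q c))" by (intro lin clinear_id)
lemma bil_tm_inner[lin]: "cbilinear (\<lambda>v' w'. tprod (m v v') (m w w'))" by (intro lin)
lemma bil_tm_outer[lin]: "cbilinear (\<lambda>v w. tapply (\<lambda>v' w'. tprod (m v v') (m w w')) t)"
  by (intro cbilinearI clinear_tapply_param lin)

lemma lin_L0[lin]: "clinear (L0 c)" unfolding L0_def by (intro lin)
lemma lin_R0[lin]: "clinear (R0 c)" unfolding R0_def by (intro lin)
lemma lin_L1[lin]: "clinear (L1 c)" unfolding L1_def by (intro lin)
lemma lin_R1[lin]: "clinear (R1 c)" unfolding R1_def by (intro lin)
lemma lin_L0c[lin]: "clinear (\<lambda>c. L0 c X)" unfolding L0_def by (intro lin)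
lemma lin_R0c[lin]: "clinear (\<lambda>c. R0 c X)" unfolding R0_def by (intro lin)
lemma lin_L1c[lin]: "clinear (\<lambda>c. L1 c X)" unfolding L1_def by (intro lin)
lemma lin_R1c[lin]: "clinear (\<lambda>c. R1 c X)" unfolding R1_def by (intro lin)

lemma L0_tprod[simp]: "L0 c (tprod p q) = tprod (m c p) q" by (simp add: L0_def lin)
lemma R0_tprod[simp]: "R0 c (tprod p q) = tprod (m p c) q" by (simp add: R0_def lin)
lemma L1_tprod[simp]: "L1 c (tprod p q) = tprod p (m c q)" by (simp add: L1_def lin)
lemma R1_tprod[simp]: "R1 c (tprod p q) = tprod p (m q c)" by (simp add: R1_def lin)

lemma tm_def': "tm s t = tapply (\<lambda>v w. tapply (\<lambda>v' w'. tprod (m v v') (m w w')) t) s"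
  by (simp add: tmul_def)
lemma tm_tprod_l: "tm (tprod a b) t = L0 a (L1 b t)"
proof -
  have "tm (tprod a b) t = tapply (\<lambda>v' w'. tprod (m a v') (m b w')) t"
    by (simp add: tm_def' lin)
  also have "\<dots> = L0 a (L1 b t)"
    unfolding L1_def by (simp add: linear_tapply_outer[OF lin_L0])
  finally show ?thesis .
qed
lemma tm_tprod: "tm (tprod a b) (tprod c d) = tprod (m a c) (m b d)"
  by (simp add: tm_tprod_l)

lemma lin_tm_r[lin]: "clinear (tm s)"
  unfolding tm_def' by (intro clinear_tapply_param lin)
lemma lin_tm_l[lin]: "clinear (\<lambda>s. tm s t)"
  unfolding tm_def' by (intro lin)

lemma tm_tprod_r: "tm s (tprod c d) = R0 c (R1 d s)"
proof (rule tensor_ext_linear[of "\<lambda>s. tm s (tprod c d)" "\<lambda>s. R0 c (R1 d s)"])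
  show "clinear (\<lambda>s. tm s (tprod c d))" by (intro lin)
  show "clinear (\<lambda>s. R0 c (R1 d s))" by (rule clinear_comp[OF lin_R0 lin_R1])
  show "tm (tprod v w) (tprod c d) = R0 c (R1 d (tprod v w))" for v w by (simp add: tm_tprod)
qed

lemma ext2: "clinear L \<Longrightarrow> clinear M \<Longrightarrow> (\<And>v w. L (tprod v w) = M (tprod v w)) \<Longrightarrow> L = M"
  using tensor_ext_linear by blast

lemma L0_L0: "L0 c (L0 c' t) = L0 (m c c') t"
  by (rule tensor_ext_linear[OF clinear_comp[OF lin_L0 lin_L0] lin_L0]) (simp add: assoc)
lemma L1_L1: "L1 c (L1 c' t) = L1 (m c c') t"
  by (rule tensor_ext_linear[OF clinear_comp[OF lin_L1 lin_L1] lin_L1]) (simp add: assoc)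
lemma R0_R0: "R0 c (R0 c' t) = R0 (m c' c) t"
  by (rule tensor_ext_linear[OF clinear_comp[OF lin_R0 lin_R0] lin_R0]) (simp add: assoc)
lemma R1_R1: "R1 c (R1 c' t) = R1 (m c' c) t"
  by (rule tensor_ext_linear[OF clinear_comp[OF lin_R1 lin_R1] lin_R1]) (simp add: assoc)
lemma L1_L0: "L1 b (L0 c t) = L0 c (L1 b t)"
  by (rule tensor_ext_linear[OF clinear_comp[OF lin_L1 lin_L0] clinear_comp[OF lin_L0 lin_L1]]) (simp)
lemma R1_R0: "R1 b (R0 c t) = R0 c (R1 b t)"
  by (rule tensor_ext_linear[OF clinear_comp[OF lin_R1 lin_R0] clinear_comp[OF lin_R0 lin_R1]]) (simp)
lemma R0_L0: "R0 b (L0 c t) = L0 c (R0 b t)"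
  by (rule tensor_ext_linear[OF clinear_comp[OF lin_R0 lin_L0] clinear_comp[OF lin_L0 lin_R0]]) (simp add: assoc)
lemma R1_L1: "R1 b (L1 c t) = L1 c (R1 b t)"
  by (rule tensor_ext_linear[OF clinear_comp[OF lin_R1 lin_L1] clinear_comp[OF lin_L1 lin_R1]]) (simp add: assoc)
lemma R0_L1: "R0 b (L1 c t) = L1 c (R0 b t)"
  by (rule tensor_ext_linear[OF clinear_comp[OF lin_R0 lin_L1] clinear_comp[OF lin_L1 lin_R0]]) (simp)
lemma R1_L0: "R1 b (L0 c t) = L0 c (R1 b t)"
  by (rule tensor_ext_linear[OF clinear_comp[OF lin_R1 lin_L0] clinear_comp[OF lin_L0 lin_R1]]) (simp)

lemma tm_L0: "tm (L0 c X) t = L0 c (tm X t)"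
proof (rule fun_cong[OF ext2, of "\<lambda>X. tm (L0 c X) t" "\<lambda>X. L0 c (tm X t)"])
  show "clinear (\<lambda>X. tm (L0 c X) t)" by (intro clinear_comp[OF lin_tm_l] lin)
  show "clinear (\<lambda>X. L0 c (tm X t))" by (intro clinear_comp[OF lin_L0] lin)
  show "tm (L0 c (tprod v w)) t = L0 c (tm (tprod v w) t)" for v w
    by (simp add: tm_tprod_l L0_L0)
qed
lemma tm_L1: "tm (L1 c X) t = L1 c (tm X t)"
proof (rule fun_cong[OF ext2, of "\<lambda>X. tm (L1 c X) t" "\<lambda>X. L1 c (tm X t)"])
  show "clinear (\<lambda>X. tm (L1 c X) t)" by (intro clinear_comp[OF lin_tm_l] lin)
  show "clinear (\<lambda>X. L1 c (tm X t))" by (intro clinear_comp[OF lin_L1] lin)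
  show "tm (L1 c (tprod v w)) t = L1 c (tm (tprod v w) t)" for v w
    by (simp add: tm_tprod_l L1_L1 L1_L0)
qed
lemma tm_R0: "tm (R0 c X) t = tm X (L0 c t)"
proof (rule fun_cong[OF ext2, of "\<lambda>X. tm (R0 c X) t" "\<lambda>X. tm X (L0 c t)"])
  show "clinear (\<lambda>X. tm (R0 c X) t)" by (intro clinear_comp[OF lin_tm_l] lin)
  show "clinear (\<lambda>X. tm X (L0 c t))" by (intro lin)
  show "tm (R0 c (tprod v w)) t = tm (tprod v w) (L0 c t)" for v w
    by (simp add: tm_tprod_l L0_L0 L1_L0)
qed
lemma tm_R1: "tm (R1 c X) t = tm X (L1 c t)"
proof (rule fun_cong[OF ext2, of "\<lambda>X. tm (R1 c X) t" "\<lambda>X. tm X (L1 c t)"])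
  show "clinear (\<lambda>X. tm (R1 c X) t)" by (intro clinear_comp[OF lin_tm_l] lin)
  show "clinear (\<lambda>X. tm X (L1 c t))" by (intro lin)
  show "tm (R1 c (tprod v w)) t = tm (tprod v w) (L1 c t)" for v w
    by (simp add: tm_tprod_l L1_L1)
qed

lemma tm_assoc: "tm (tm X Y) Z = tm X (tm Y Z)"
proof (rule fun_cong[OF ext2, of "\<lambda>X. tm (tm X Y) Z" "\<lambda>X. tm X (tm Y Z)"])
  show "clinear (\<lambda>X. tm (tm X Y) Z)" by (intro clinear_comp[OF lin_tm_l] lin)
  show "clinear (\<lambda>X. tm X (tm Y Z))" by (intro lin)
  show "tm (tm (tprod v w) Y) Z = tm (tprod v w) (tm Y Z)" for v w
    by (simp add: tm_tprod_l tm_L0 tm_L1)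
qed

lemma tm_nd_l:
  assumes "\<And>t. tm X t = 0" shows "X = 0"
proof (rule tensor_inj_right[of "\<lambda>d w. m w d"])
  show "clinear (\<lambda>w. m w d)" for d by (rule lin_l)
  show "v = 0" if "\<And>d. m v d = 0" for v using nd_l that by blast
  fix d
  show "tapply (\<lambda>v w. tprod v (m w d)) X = 0"
  proof (rule tensor_inj_left[of "\<lambda>c v. m v c"])
    show "clinear (\<lambda>v. m v c)" for c by (rule lin_l)
    show "v = 0" if "\<And>c. m v c = 0" for v using nd_l that by blast
    fix c
    have "tapply (\<lambda>v w. tprod (m v c) w) (tapply (\<lambda>v w. tprod v (m w d)) X) = tm X (tprod c d)"
      by (simp add: tm_tprod_r R0_def R1_def)
    then show "tapply (\<lambda>v w. tprod (m v c) w) (tapply (\<lambda>v w. tprod v (m w d)) X) = 0"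
      using assms by simp
  qed
qed

lemma tm_nd_r:
  assumes "\<And>t. tm t X = 0" shows "X = 0"
proof (rule tensor_inj_right[of "\<lambda>d w. m d w"])
  show "clinear (\<lambda>w. m d w)" for d by (rule lin_r')
  show "v = 0" if "\<And>d. m d v = 0" for v using nd_r that by blast
  fix d
  show "tapply (\<lambda>v w. tprod v (m d w)) X = 0"
  proof (rule tensor_inj_left[of "\<lambda>c v. m c v"])
    show "clinear (\<lambda>v. m c v)" for c by (rule lin_r')
    show "v = 0" if "\<And>c. m c v = 0" for v using nd_r that by blast
    fix c
    have "tapply (\<lambda>v w. tprod (m c v) w) (tapply (\<lambda>v w. tprod v (m d w)) X) = tm (tprod c d) X"
      by (simp add: tm_tprod_l L0_def L1_def)
    then show "tapply (\<lambda>v w. tprod (m c v) w) (tapply (\<lambda>v w. tprod v (m d w)) X) = 0"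
      using assms by simp
  qed
qed

lemma tm_eq_r: "(\<And>t. tm X t = tm Y t) \<Longrightarrow> X = Y"
  using tm_nd_l[of "X - Y"] clinear_diff[OF lin_tm_l] by (metis eq_iff_diff_eq_0)
lemma tm_eq_l: "(\<And>t. tm t X = tm t Y) \<Longrightarrow> X = Y"
  using tm_nd_r[of "X - Y"] clinear_diff[OF lin_tm_r] by (metis eq_iff_diff_eq_0)

section \<open>Multipliers of A \<otimes> A\<close>

lemma mult_lin:
  assumes M: "is_multiplier tm M"
  shows "clinear (fst M)" "clinear (snd M)"
proof -
  have a1: "fst M (tm x y) = tm (fst M x) y" and a2: "snd M (tm x y) = tm x (snd M y)"
    and a3: "tm x (fst M y) = tm (snd M x) y" for x y
    using M by (auto simp: is_multiplier_def)
  show "clinear (fst M)"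
  proof (rule clinearI)
    fix x y show "fst M (x + y) = fst M x + fst M y"
      by (rule tm_eq_l) (simp add: a3 clinear_add[OF lin_tm_r])
    fix c x show "fst M (cscale c x) = cscale c (fst M x)"
      by (rule tm_eq_l) (simp add: a3 clinear_scale[OF lin_tm_r])
  qed
  show "clinear (snd M)"
  proof (rule clinearI)
    fix x y show "snd M (x + y) = snd M x + snd M y"
      by (rule tm_eq_r) (simp add: a3[symmetric] clinear_add[OF lin_tm_l])
    fix c x show "snd M (cscale c x) = cscale c (snd M x)"
      by (rule tm_eq_r) (simp add: a3[symmetric] clinear_scale[OF lin_tm_l])
  qed
qed

lemma elem_of_mult:
  assumes "in_alg tm M" shows "M = mult_of tm (elem_of tm M)"
  using assms unfolding in_alg_def elem_of_def by (rule someI_ex)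

lemma elem_of_fst: "in_alg tm M \<Longrightarrow> tm (elem_of tm M) t = fst M t"
  using elem_of_mult[of M] by (metis fst_conv mult_of_def)

end


lemmas [lin] = clinear_id clinear_scalar_mult

lemma lin_lslice_c[lin]: "clinear g \<Longrightarrow> clinear P \<Longrightarrow> clinear (\<lambda>x. lslice g (P x))"
  by (rule clinear_comp[OF clinear_lslice])
lemma lin_rslice_c[lin]: "clinear f \<Longrightarrow> clinear P \<Longrightarrow> clinear (\<lambda>x. rslice f (P x))"
  by (rule clinear_comp[OF clinear_rslice])
lemma lin_tapply_c[lin]: "cbilinear F \<Longrightarrow> clinear P \<Longrightarrow> clinear (\<lambda>x. tapply F (P x))"
  by (rule clinear_comp[OF clinear_tapply])
lemma lin_cscale_c[lin]: "clinear P \<Longrightarrow> clinear (\<lambda>x. cscale c (P x))"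
  by (rule clinear_fun_scale)
lemma lin_tprod_both[lin]: "clinear P \<Longrightarrow> clinear (\<lambda>x. tprod (P x) w) \<and> clinear (\<lambda>x. tprod v (P x))"
  by (simp add: clinear_tprod_lc clinear_tprod_rc)

lemma lslice_tapply: "clinear g \<Longrightarrow> lslice g (tapply F t) = tapply (\<lambda>v w. lslice g (F v w)) t"
  by (rule linear_tapply_outer[OF clinear_lslice])
lemma rslice_tapply: "clinear f \<Longrightarrow> rslice f (tapply F t) = tapply (\<lambda>v w. rslice f (F v w)) t"
  by (rule linear_tapply_outer[OF clinear_rslice])

context nalg
begin

lemma lin_m_l_c[lin]: "clinear P \<Longrightarrow> clinear (\<lambda>x. m (P x) y)" by (rule clinear_comp[OF lin_l])
lemma lin_m_r_c[lin]: "clinear P \<Longrightarrow> clinear (\<lambda>x. m y (P x))" by (rule clinear_comp[OF lin_r])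
lemma lin_L0_c[lin]: "clinear P \<Longrightarrow> clinear (\<lambda>x. L0 c (P x))" by (rule clinear_comp[OF lin_L0])
lemma lin_L1_c[lin]: "clinear P \<Longrightarrow> clinear (\<lambda>x. L1 c (P x))" by (rule clinear_comp[OF lin_L1])
lemma lin_R0_c[lin]: "clinear P \<Longrightarrow> clinear (\<lambda>x. R0 c (P x))" by (rule clinear_comp[OF lin_R0])
lemma lin_R1_c[lin]: "clinear P \<Longrightarrow> clinear (\<lambda>x. R1 c (P x))" by (rule clinear_comp[OF lin_R1])

lemma lslice_L0: "clinear g \<Longrightarrow> lslice g (L0 c X) = m c (lslice g X)"
  by (rule tensor_ext_linear[OF clinear_comp[OF clinear_lslice lin_L0] clinear_comp[OF lin_r clinear_lslice]])
     (simp_all add: scale_r)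
lemma lslice_R0: "clinear g \<Longrightarrow> lslice g (R0 c X) = m (lslice g X) c"
  by (rule tensor_ext_linear[OF clinear_comp[OF clinear_lslice lin_R0] clinear_comp[OF lin_l clinear_lslice]])
     (simp_all add: scale_l)
lemma rslice_L1: "clinear f \<Longrightarrow> rslice f (L1 c X) = m c (rslice f X)"
  by (rule tensor_ext_linear[OF clinear_comp[OF clinear_rslice lin_L1] clinear_comp[OF lin_r clinear_rslice]])
     (simp_all add: scale_r)
lemma rslice_R1: "clinear f \<Longrightarrow> rslice f (R1 c X) = m (rslice f X) c"
  by (rule tensor_ext_linear[OF clinear_comp[OF clinear_rslice lin_R1] clinear_comp[OF lin_l clinear_rslice]])
     (simp_all add: scale_l)

lemma L0_eq: "(\<And>c. L0 c X = L0 c Y) \<Longrightarrow> X = Y"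
proof -
  assume a: "\<And>c. L0 c X = L0 c Y"
  have "X - Y = 0"
  proof (rule tensor_inj_left[of "\<lambda>c v. m c v"])
    show "clinear (m c)" for c by (rule lin_r)
    show "v = 0" if "\<And>c. m c v = 0" for v using nd_r that by blast
    fix c show "tapply (\<lambda>v w. tprod (m c v) w) (X - Y) = 0"
      using a[of c] clinear_diff[OF lin_L0, of c X Y] by (simp add: L0_def)
  qed
  then show ?thesis by simp
qed

lemma R1_eq: "(\<And>c. R1 c X = R1 c Y) \<Longrightarrow> X = Y"
proof -
  assume a: "\<And>c. R1 c X = R1 c Y"
  have "X - Y = 0"
  proof (rule tensor_inj_right[of "\<lambda>c v. m v c"])
    show "clinear (\<lambda>v. m v c)" for c by (rule lin_l)
    show "v = 0" if "\<And>c. m v c = 0" for v using nd_l that by blast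
    fix c show "tapply (\<lambda>v w. tprod v (m w c)) (X - Y) = 0"
      using a[of c] clinear_diff[OF lin_R1, of c X Y] by (simp add: R1_def)
  qed
  then show ?thesis by simp
qed

end

locale rmha =
  fixes m :: "'a::cvec \<Rightarrow> 'a \<Rightarrow> 'a" and \<Delta> :: "'a comult"
  assumes rm: "regular_mha m \<Delta>"

sublocale rmha \<subseteq> nalg m
  using rm by (unfold_locales) (simp_all add: regular_mha_def)

context rmha
begin

abbreviation "DL a \<equiv> fst (\<Delta> a)"
abbreviation "DR a \<equiv> snd (\<Delta> a)"
abbreviation "T1 \<equiv> cov1 m \<Delta>"
abbreviation "T2 \<equiv> cov2 m \<Delta>"
abbreviation "T3 \<equiv> cov3 m \<Delta>"
abbreviation "T4 \<equiv> cov4 m \<Delta>"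

lemma Dmult: "is_multiplier tm (\<Delta> a)" using rm by (simp add: regular_mha_def)
lemma lin_DL[lin]: "clinear (DL a)" using mult_lin[OF Dmult] by blast
lemma lin_DR[lin]: "clinear (DR a)" using mult_lin[OF Dmult] by blast
lemma lin_DL_c[lin]: "clinear P \<Longrightarrow> clinear (\<lambda>x. DL a (P x))" by (rule clinear_comp[OF lin_DL])
lemma tm_DL: "tm (DL a X) t = DL a (tm X t)" using Dmult by (simp add: is_multiplier_def)
lemma tm_DL_r: "tm X (DL a t) = tm (DR a X) t" using Dmult by (simp add: is_multiplier_def)
lemma DL_mult: "DL (m a b) t = DL a (DL b t)" using rm by (simp add: regular_mha_def mcomp_def)
lemma DL_add: "DL (a + b) t = DL a t + DL b t" using rm by (simp add: regular_mha_def madd_def)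
lemma DL_scale: "DL (cscale c a) t = cscale c (DL a t)" using rm by (simp add: regular_mha_def mscale_def)
lemma lin_DLp[lin]: "clinear (\<lambda>a. DL a t)" by (simp add: clinearI DL_add DL_scale)
lemma lin_DLp_c[lin]: "clinear P \<Longrightarrow> clinear (\<lambda>x. DL (P x) t)" by (rule clinear_comp[OF lin_DLp])

lemma in_alg_M: "in_alg tm (M1 m \<Delta> a b)" "in_alg tm (M2 m \<Delta> a b)" "in_alg tm (M3 m \<Delta> a b)" "in_alg tm (M4 m \<Delta> a b)"
  using rm by (simp_all add: regular_mha_def)

lemma T1_char: "tm (T1 a b) t = DL a (L1 b t)"
  unfolding cov1_def using elem_of_fst[OF in_alg_M(1)] by (simp add: M1_def mcomp_def one_ten_def L1_def)
lemma T2_char: "tm (T2 a b) t = L0 a (DL b t)"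
  unfolding cov2_def using elem_of_fst[OF in_alg_M(2)] by (simp add: M2_def mcomp_def ten_one_def L0_def)
lemma T3_char: "tm (T3 a b) t = DL a (L0 b t)"
  unfolding cov3_def using elem_of_fst[OF in_alg_M(3)] by (simp add: M3_def mcomp_def ten_one_def L0_def)
lemma T4_char: "tm (T4 a b) t = L1 a (DL b t)"
  unfolding cov4_def using elem_of_fst[OF in_alg_M(4)] by (simp add: M4_def mcomp_def one_ten_def L1_def)

lemmas Tchar = T1_char T2_char T3_char T4_char tm_L0 tm_L1 tm_R0 tm_R1 tm_DL tm_tprod_l
  L0_L0 L1_L1 L1_L0 DL_mult tm_assoc

lemma lin_T1a[lin]: "clinear (\<lambda>a. T1 a b)"
  by (rule clinearI; rule tm_eq_r) (simp_all add: Tchar DL_add DL_scale clinear_add[OF lin_tm_l] clinear_scale[OF lin_tm_l])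
lemma lin_T1b[lin]: "clinear (T1 a)"
  by (rule clinearI; rule tm_eq_r) (simp_all add: Tchar clinear_add[OF lin_tm_l] clinear_scale[OF lin_tm_l]
      clinear_add[OF lin_L1c] clinear_scale[OF lin_L1c] clinear_add[OF lin_DL] clinear_scale[OF lin_DL])
lemma lin_T2a[lin]: "clinear (\<lambda>a. T2 a b)"
  by (rule clinearI; rule tm_eq_r) (simp_all add: Tchar clinear_add[OF lin_tm_l] clinear_scale[OF lin_tm_l]
      clinear_add[OF lin_L0c] clinear_scale[OF lin_L0c])
lemma lin_T2b[lin]: "clinear (T2 a)"
  by (rule clinearI; rule tm_eq_r) (simp_all add: Tchar DL_add DL_scale clinear_add[OF lin_tm_l] clinear_scale[OF lin_tm_l]
      clinear_add[OF lin_L0] clinear_scale[OF lin_L0])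
lemma lin_T3a[lin]: "clinear (\<lambda>a. T3 a b)"
  by (rule clinearI; rule tm_eq_r) (simp_all add: Tchar DL_add DL_scale clinear_add[OF lin_tm_l] clinear_scale[OF lin_tm_l])
lemma lin_T3b[lin]: "clinear (T3 a)"
  by (rule clinearI; rule tm_eq_r) (simp_all add: Tchar clinear_add[OF lin_tm_l] clinear_scale[OF lin_tm_l]
      clinear_add[OF lin_L0c] clinear_scale[OF lin_L0c] clinear_add[OF lin_DL] clinear_scale[OF lin_DL])
lemma lin_T4a[lin]: "clinear (\<lambda>a. T4 a b)"
  by (rule clinearI; rule tm_eq_r) (simp_all add: Tchar clinear_add[OF lin_tm_l] clinear_scale[OF lin_tm_l]
      clinear_add[OF lin_L1c] clinear_scale[OF lin_L1c])
lemma lin_T4b[lin]: "clinear (T4 a)"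
  by (rule clinearI; rule tm_eq_r) (simp_all add: Tchar DL_add DL_scale clinear_add[OF lin_tm_l] clinear_scale[OF lin_tm_l]
      clinear_add[OF lin_L1] clinear_scale[OF lin_L1])

lemma bil_T1[lin]: "cbilinear T1" by (rule cbilinearI) (rule lin_T1b, rule lin_T1a)
lemma bil_T2[lin]: "cbilinear T2" by (rule cbilinearI) (rule lin_T2b, rule lin_T2a)
lemma bil_T3[lin]: "cbilinear T3" by (rule cbilinearI) (rule lin_T3b, rule lin_T3a)
lemma bil_T4[lin]: "cbilinear T4" by (rule cbilinearI) (rule lin_T4b, rule lin_T4a)
lemma lin_T1a_c[lin]: "clinear P \<Longrightarrow> clinear (\<lambda>x. T1 (P x) b)" by (rule clinear_comp[OF lin_T1a])
lemma lin_T1b_c[lin]: "clinear P \<Longrightarrow> clinear (\<lambda>x. T1 a (P x))" by (rule clinear_comp[OF lin_T1b])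
lemma lin_T2a_c[lin]: "clinear P \<Longrightarrow> clinear (\<lambda>x. T2 (P x) b)" by (rule clinear_comp[OF lin_T2a])
lemma lin_T2b_c[lin]: "clinear P \<Longrightarrow> clinear (\<lambda>x. T2 a (P x))" by (rule clinear_comp[OF lin_T2b])
lemma lin_T3a_c[lin]: "clinear P \<Longrightarrow> clinear (\<lambda>x. T3 (P x) b)" by (rule clinear_comp[OF lin_T3a])
lemma lin_T3b_c[lin]: "clinear P \<Longrightarrow> clinear (\<lambda>x. T3 a (P x))" by (rule clinear_comp[OF lin_T3b])
lemma lin_T4a_c[lin]: "clinear P \<Longrightarrow> clinear (\<lambda>x. T4 (P x) b)" by (rule clinear_comp[OF lin_T4a])
lemma lin_T4b_c[lin]: "clinear P \<Longrightarrow> clinear (\<lambda>x. T4 a (P x))" by (rule clinear_comp[OF lin_T4b])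

lemma M_a: "L0 c (T1 a a') = R1 a' (T2 c a)" by (rule tm_eq_r) (simp add: Tchar)
lemma M_b: "DL a (T1 b c) = T1 (m a b) c" by (rule tm_eq_r) (simp add: Tchar)
lemma M_c: "R0 c (T1 a b) = R1 b (T3 a c)" by (rule tm_eq_r) (simp add: Tchar)
lemma M_d: "DL v (tprod r s) = R0 r (T1 v s)" by (rule tm_eq_r) (simp add: Tchar)
lemma M_d': "DL v (tprod r s) = R1 s (T3 v r)" by (rule tm_eq_r) (simp add: Tchar)
lemma M_e: "L0 e (T4 g a) = L1 g (T2 e a)" by (rule tm_eq_r) (simp add: Tchar)
lemma M_f: "L1 g (T1 c g') = R1 g' (T4 g c)" by (rule tm_eq_r) (simp add: Tchar)
lemma M_g: "L0 y (T3 a x) = R0 x (T2 y a)" by (rule tm_eq_r) (simp add: Tchar)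
lemma M_h: "R1 d (T1 b c) = T1 b (m c d)" by (rule tm_eq_r) (simp add: Tchar)

end


lemma tassoc_linear: "clinear L \<Longrightarrow> L (tassoc W) = tapply (\<lambda>u s. tapply (\<lambda>v w. L (tprod (tprod u v) w)) s) W"
  unfolding tassoc_def by (simp add: linear_tapply_outer)

lemma tapply_tprod_self: "tapply (\<lambda>v w. tprod v w) s = s"
  using tapply_tprod_id[of s] by simp

lemma lslice_rslice_swap: "clinear f \<Longrightarrow> clinear g \<Longrightarrow> g (rslice f Z) = f (lslice g Z)"
  by (rule tensor_ext_linear[OF clinear_comp[OF _ clinear_rslice] clinear_comp[OF _ clinear_lslice]])
     (simp_all add: clinear_scale)

context rmha
begin

lemma coassoc: "tapply (\<lambda>p q. tprod (T2 a p) q) (T1 b c) = tassoc (tapply (\<lambda>u v. tprod u (T1 v c)) (T2 a b))"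
  using rm by (simp add: regular_mha_def)

lemma CA_g:
  assumes g: "clinear g"
  shows "T2 a (lslice g (T1 b c)) = tapply (\<lambda>u v. tprod u (lslice g (T1 v c))) (T2 a b)"
proof -
  have "T2 a (lslice g (T1 b c)) = tapply (\<lambda>p q. cscale (g q) (T2 a p)) (T1 b c)"
    unfolding lslice_def by (simp add: linear_tapply_outer[OF lin_T2b] clinear_scale[OF lin_T2b])
  also have "\<dots> = lslice g (tapply (\<lambda>p q. tprod (T2 a p) q) (T1 b c))"
    by (simp add: lslice_tapply[OF g] g)
  also have "\<dots> = lslice g (tassoc (tapply (\<lambda>u v. tprod u (T1 v c)) (T2 a b)))"
    by (simp add: coassoc)
  also have "\<dots> = tapply (\<lambda>u s. tapply (\<lambda>v w. cscale (g w) (tprod u v)) s) (tapply (\<lambda>u v. tprod u (T1 v c)) (T2 a b))"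
    by (simp add: tassoc_linear[OF clinear_lslice[OF g]] g)
  also have "\<dots> = tapply (\<lambda>u s. tprod u (lslice g s)) (tapply (\<lambda>u v. tprod u (T1 v c)) (T2 a b))"
    unfolding lslice_def
    by (rule tapply_cong) (simp add: linear_tapply_outer[OF clinear_tprod_r] tprod_scale_r)
  also have "\<dots> = tapply (\<lambda>u v. tprod u (lslice g (T1 v c))) (T2 a b)"
    by (subst tapply_tapply) (intro lin g, simp add: lin g)
  finally show ?thesis .
qed

lemma CA_f:
  assumes f: "clinear f"
  shows "tapply (\<lambda>p q. tprod (rslice f (T2 a p)) q) (T1 b c) = T1 (rslice f (T2 a b)) c"
proof -
  let ?L = "tapply (\<lambda>X q. tprod (rslice f X) q)"
  have L: "clinear ?L" by (intro lin f)
  have "tapply (\<lambda>p q. tprod (rslice f (T2 a p)) q) (T1 b c) = ?L (tapply (\<lambda>p q. tprod (T2 a p) q) (T1 b c))"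
    by (simp add: linear_tapply_outer[OF L] lin f)
  also have "\<dots> = ?L (tassoc (tapply (\<lambda>u v. tprod u (T1 v c)) (T2 a b)))" by (simp add: coassoc)
  also have "\<dots> = tapply (\<lambda>u s. tapply (\<lambda>v w. tprod (cscale (f u) v) w) s) (tapply (\<lambda>u v. tprod u (T1 v c)) (T2 a b))"
    by (simp add: tassoc_linear[OF L] lin f)
  also have "\<dots> = tapply (\<lambda>u s. cscale (f u) s) (tapply (\<lambda>u v. tprod u (T1 v c)) (T2 a b))"
    by (rule tapply_cong) (simp add: tprod_scale_l tapply_fun_scale tapply_tprod_self)
  also have "\<dots> = tapply (\<lambda>u v. cscale (f u) (T1 v c)) (T2 a b)"
    by (subst tapply_tapply) (intro lin f, simp add: lin f)
  also have "\<dots> = T1 (rslice f (T2 a b)) c"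
    unfolding rslice_def by (simp add: linear_tapply_outer[OF lin_T1a] clinear_scale[OF lin_T1a])
  finally show ?thesis .
qed

end


context nalg
begin
lemma L0_tapply_ltens: "clinear G \<Longrightarrow> L0 c (tapply (\<lambda>p q. tprod p (G q)) Z) = tapply (\<lambda>p q. tprod p (G q)) (L0 c Z)"
  by (rule tensor_ext_linear[OF clinear_comp[OF lin_L0 clinear_tapply] clinear_comp[OF clinear_tapply lin_L0]])
     (intro lin, assumption, intro lin, assumption, simp add: lin)
lemma tapply_R1: assumes F: "cbilinear F" shows "tapply F (R1 b Z) = tapply (\<lambda>u v. F u (m v b)) Z"
  unfolding R1_def by (simp add: tapply_tapply[OF F] F)
lemma tapply_L0: assumes F: "cbilinear F" shows "tapply F (L0 b Z) = tapply (\<lambda>u v. F (m b u) v) Z"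
  unfolding L0_def by (simp add: tapply_tapply[OF F] F)
lemma tapply_L1: assumes F: "cbilinear F" shows "tapply F (L1 b Z) = tapply (\<lambda>u v. F u (m b v)) Z"
  unfolding L1_def by (simp add: tapply_tapply[OF F] F)
lemma tapply_R0: assumes F: "cbilinear F" shows "tapply F (R0 b Z) = tapply (\<lambda>u v. F (m u b) v) Z"
  unfolding R0_def by (simp add: tapply_tapply[OF F] F)
lemma lslice_m: "clinear g \<Longrightarrow> m (lslice g Z) r = lslice g (R0 r Z)"
  by (simp add: lslice_R0)
end

context rmha
begin

lemma EL_ER:
  assumes g: "clinear g"
  shows "tapply (\<lambda>p q. tprod p (lslice g (T1 q b'))) (T1 a b) = tapply (\<lambda>r s. T1 (lslice g (T1 a s)) r) (T1 b b')"
proof (rule L0_eq)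
  fix c
  let ?G = "\<lambda>q. lslice g (T1 q b')"
  have G: "clinear ?G" by (intro lin g)
  have "L0 c (tapply (\<lambda>p q. tprod p (?G q)) (T1 a b)) = tapply (\<lambda>p q. tprod p (?G q)) (L0 c (T1 a b))"
    by (rule L0_tapply_ltens[OF G])
  also have "\<dots> = tapply (\<lambda>p q. tprod p (?G q)) (R1 b (T2 c a))" by (simp add: M_a)
  also have "\<dots> = tapply (\<lambda>u v. tprod u (?G (m v b))) (T2 c a)"
    by (subst tapply_R1) (intro lin g, simp)
  finally have lhs: "L0 c (tapply (\<lambda>p q. tprod p (?G q)) (T1 a b)) = tapply (\<lambda>u v. tprod u (?G (m v b))) (T2 c a)" .
  have inner: "?G (m v b) = tapply (\<lambda>r s. m (lslice g (T1 v s)) r) (T1 b b')" for v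
  proof -
    have "tapply (\<lambda>r s. m (lslice g (T1 v s)) r) (T1 b b') = tapply (\<lambda>r s. lslice g (DL v (tprod r s))) (T1 b b')"
      by (rule tapply_cong) (simp add: lslice_m g M_d)
    also have "\<dots> = lslice g (DL v (T1 b b'))"
      by (simp add: lslice_tapply[OF g, symmetric] linear_tapply_outer[OF lin_DL, symmetric] tapply_tprod_self)
    also have "\<dots> = ?G (m v b)" by (simp add: M_b)
    finally show ?thesis by simp
  qed
  have "L0 c (tapply (\<lambda>r s. T1 (lslice g (T1 a s)) r) (T1 b b')) = tapply (\<lambda>r s. L0 c (T1 (lslice g (T1 a s)) r)) (T1 b b')"
    by (rule linear_tapply_outer[OF lin_L0])
  also have "\<dots> = tapply (\<lambda>r s. R1 r (T2 c (lslice g (T1 a s)))) (T1 b b')"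
    by (simp add: M_a)
  also have "\<dots> = tapply (\<lambda>r s. R1 r (tapply (\<lambda>u v. tprod u (lslice g (T1 v s))) (T2 c a))) (T1 b b')"
    by (simp add: CA_g[OF g])
  also have "\<dots> = tapply (\<lambda>r s. tapply (\<lambda>u v. tprod u (m (lslice g (T1 v s)) r)) (T2 c a)) (T1 b b')"
    by (rule tapply_cong) (simp add: linear_tapply_outer[OF lin_R1])
  also have "\<dots> = tapply (\<lambda>u v. tapply (\<lambda>r s. tprod u (m (lslice g (T1 v s)) r)) (T1 b b')) (T2 c a)"
    by (rule tapply_swap)
  also have "\<dots> = tapply (\<lambda>u v. tprod u (tapply (\<lambda>r s. m (lslice g (T1 v s)) r) (T1 b b'))) (T2 c a)"
    by (rule tapply_cong) (simp add: linear_tapply_outer[OF clinear_tprod_r])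
  also have "\<dots> = tapply (\<lambda>u v. tprod u (?G (m v b))) (T2 c a)"
    by (simp add: inner)
  finally show "L0 c (tapply (\<lambda>p q. tprod p (?G q)) (T1 a b)) = L0 c (tapply (\<lambda>r s. T1 (lslice g (T1 a s)) r) (T1 b b'))"
    using lhs by simp
qed

lemma bijT1: "bij (tapply T1)" and bijT2: "bij (tapply T2)"
  using rm by (simp_all add: regular_mha_def)

definition T1i where "T1i = inv (tapply T1)"
definition T2i where "T2i = inv (tapply T2)"

lemma T1_T1i[simp]: "tapply T1 (T1i X) = X"
  unfolding T1i_def using bijT1 by (simp add: bij_def surj_f_inv_f)
lemma T1i_T1[simp]: "T1i (tapply T1 U) = U"
  unfolding T1i_def using bijT1 by (simp add: bij_def inv_f_f)
lemma T2_T2i[simp]: "tapply T2 (T2i X) = X"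
  unfolding T2i_def using bijT2 by (simp add: bij_def surj_f_inv_f)
lemma T2i_T2[simp]: "T2i (tapply T2 U) = U"
  unfolding T2i_def using bijT2 by (simp add: bij_def inv_f_f)

lemma inv_linear:
  assumes L: "clinear L" and li: "\<And>x. L (Li x) = x" and il: "\<And>u. Li (L u) = u"
  shows "clinear Li"
proof (rule clinearI)
  fix x y
  have "Li (x + y) = Li (L (Li x) + L (Li y))" by (simp add: li)
  also have "\<dots> = Li x + Li y" by (simp add: clinear_add[OF L, symmetric] il)
  finally show "Li (x + y) = Li x + Li y" .
  fix c x
  have "Li (cscale c x) = Li (cscale c (L (Li x)))" by (simp add: li)
  also have "\<dots> = cscale c (Li x)" by (simp add: clinear_scale[OF L, symmetric] il)
  finally show "Li (cscale c x) = cscale c (Li x)" .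
qed

lemma lin_T1i[lin]: "clinear T1i" by (rule inv_linear[OF clinear_tapply[OF bil_T1]]) simp_all
lemma lin_T2i[lin]: "clinear T2i" by (rule inv_linear[OF clinear_tapply[OF bil_T2]]) simp_all
lemma lin_T1i_c[lin]: "clinear P \<Longrightarrow> clinear (\<lambda>x. T1i (P x))" by (rule clinear_comp[OF lin_T1i])
lemma lin_T2i_c[lin]: "clinear P \<Longrightarrow> clinear (\<lambda>x. T2i (P x))" by (rule clinear_comp[OF lin_T2i])

lemma T1_tprod: "T1 a b = tapply T1 (tprod a b)" by (simp add: lin)

section \<open>Counit\<close>

lemma counit_exists:
  "\<exists>\<epsilon>. clinear \<epsilon> \<and> (\<forall>a b. rslice \<epsilon> (T1 a b) = m a b) \<and> (\<forall>a b. lslice \<epsilon> (T2 a b) = m a b)"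
proof -
  define E1 where "E1 X = tapply m (T1i X)" for X
  have E1lin: "clinear E1" unfolding E1_def by (intro lin)
  have E1T1: "E1 (T1 a b) = m a b" for a b
    unfolding E1_def T1_tprod[of a b] T1i_T1 by (simp add: lin)
  have star: "E1 (tprod (rslice f (T2 a p)) q) = cscale (f (m a p)) q" if f: "clinear f" for f a p q
  proof -
    define U where "U = T1i (tprod p q)"
    have U: "tapply T1 U = tprod p q" by (simp add: U_def)
    define \<Phi> where "\<Phi> p' q' = E1 (tprod (rslice f (T2 a p')) q')" for p' q'
    have bPhi: "cbilinear \<Phi>" unfolding \<Phi>_def by (intro cbilinearI clinear_comp[OF E1lin] lin f)
    have "E1 (tprod (rslice f (T2 a p)) q) = tapply \<Phi> (tapply T1 U)" by (simp add: U bPhi \<Phi>_def)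
    also have "\<dots> = tapply (\<lambda>b c. tapply \<Phi> (T1 b c)) U" by (rule tapply_tapply[OF bPhi])
    also have "\<dots> = tapply (\<lambda>b c. m (rslice f (T2 a b)) c) U"
    proof (rule tapply_cong)
      fix b c
      have "tapply \<Phi> (T1 b c) = E1 (tapply (\<lambda>p' q'. tprod (rslice f (T2 a p')) q') (T1 b c))"
        unfolding \<Phi>_def by (rule linear_tapply_outer[OF E1lin, symmetric])
      also have "\<dots> = m (rslice f (T2 a b)) c" by (simp add: CA_f[OF f] E1T1)
      finally show "tapply \<Phi> (T1 b c) = m (rslice f (T2 a b)) c" .
    qed
    also have "\<dots> = tapply (\<lambda>b c. rslice f (L0 a (T1 b c))) U"
      by (rule tapply_cong) (simp add: M_a rslice_R1 f)
    also have "\<dots> = rslice f (L0 a (tapply T1 U))"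
      by (simp add: linear_tapply_outer[OF clinear_comp[OF clinear_rslice[OF f] lin_L0]])
    also have "\<dots> = cscale (f (m a p)) q" by (simp add: U f)
    finally show ?thesis .
  qed
  show ?thesis
  proof (cases "\<exists>u0::'a. u0 \<noteq> 0")
    case False
    then have z: "x = 0" for x :: 'a by blast
    show ?thesis by (rule exI[of _ "\<lambda>_. 0"]) (simp add: z[of "m _ _"] z[of "rslice _ _"] z[of "lslice _ _"])
  next
    case True
    then obtain u0 :: 'a where u0: "u0 \<noteq> 0" by blast
    obtain \<omega> :: "'a \<Rightarrow> complex" where om: "clinear \<omega>" "\<omega> u0 = 1" using exists_functional[OF u0] by blast
    define \<epsilon> where "\<epsilon> v = \<omega> (tapply m (T2i (tprod u0 v)))" for v
    have elin: "clinear \<epsilon>" unfolding \<epsilon>_def by (intro clinear_comp[OF om(1)] lin)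
    have E1e: "E1 (tprod v q) = cscale (\<epsilon> v) q" for v q
    proof -
      define V where "V = T2i (tprod u0 v)"
      have V: "tapply T2 V = tprod u0 v" by (simp add: V_def)
      have v: "v = tapply (\<lambda>a p. rslice \<omega> (T2 a p)) V"
        using arg_cong[OF V, of "rslice \<omega>"] by (simp add: rslice_tapply om)
      have "E1 (tprod v q) = tapply (\<lambda>a p. E1 (tprod (rslice \<omega> (T2 a p)) q)) V"
        by (subst v) (rule linear_tapply_outer[OF clinear_comp[OF E1lin clinear_tprod_l]])
      also have "\<dots> = tapply (\<lambda>a p. cscale (\<omega> (m a p)) q) V" by (simp add: star om)
      also have "\<dots> = cscale (\<omega> (tapply m V)) q"
        by (rule linear_tapply_outer[OF clinear_scalar_mult[OF om(1)], symmetric])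
      finally show ?thesis by (simp add: \<epsilon>_def V_def)
    qed
    have E1r: "E1 X = rslice \<epsilon> X" for X
      by (rule tensor_ext_linear[OF E1lin clinear_rslice[OF elin]]) (simp add: E1e elin)
    have cu1: "rslice \<epsilon> (T1 a b) = m a b" for a b using E1T1 E1r by simp
    have cu2: "lslice \<epsilon> (T2 a p) = m a p" for a p
    proof (rule separation[where v="lslice \<epsilon> (T2 a p) - m a p", simplified])
      fix f :: "'a \<Rightarrow> complex" assume f: "clinear f"
      have "cscale (f (lslice \<epsilon> (T2 a p))) u0 = cscale (\<epsilon> (rslice f (T2 a p))) u0"
        by (simp add: lslice_rslice_swap f elin)
      also have "\<dots> = E1 (tprod (rslice f (T2 a p)) u0)" by (simp add: E1e)
      also have "\<dots> = cscale (f (m a p)) u0" by (rule star[OF f])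
      finally have "cscale (f (lslice \<epsilon> (T2 a p))) u0 = cscale (f (m a p)) u0" .
      then have "\<omega> (cscale (f (lslice \<epsilon> (T2 a p))) u0) = \<omega> (cscale (f (m a p)) u0)" by (rule arg_cong)
      then have "f (lslice \<epsilon> (T2 a p)) = f (m a p)" by (simp add: clinear_scale[OF om(1)] om(2))
      then show "f (lslice \<epsilon> (T2 a p) - m a p) = 0" by (simp add: clinear_diff[OF f])
    qed
    show ?thesis using elin cu1 cu2 by blast
  qed
qed

end


context rmha
begin

definition eps where
  "eps = (SOME \<epsilon>. clinear \<epsilon> \<and> (\<forall>a b. rslice \<epsilon> (T1 a b) = m a b) \<and> (\<forall>a b. lslice \<epsilon> (T2 a b) = m a b))"

lemma eps_props: "clinear eps \<and> (\<forall>a b. rslice eps (T1 a b) = m a b) \<and> (\<forall>a b. lslice eps (T2 a b) = m a b)"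
  unfolding eps_def by (rule someI_ex[OF counit_exists])
lemma lin_eps[lin]: "clinear eps" using eps_props by blast
lemma cu1: "rslice eps (T1 a b) = m a b" using eps_props by blast
lemma cu2: "lslice eps (T2 a b) = m a b" using eps_props by blast
declare lin_eps[simp] bil_T1[simp] bil_T2[simp] bil_T3[simp] bil_T4[simp] bil[simp]
lemma lin_eps_c[lin]: "clinear P \<Longrightarrow> clinear (\<lambda>x. eps (P x))" by (rule clinear_comp[OF lin_eps])

lemma rslice_eps_T1U: "rslice eps (tapply T1 U) = tapply m U"
  by (simp add: rslice_tapply cu1)

lemma T1_L0: "tapply T1 (L0 a U) = DL a (tapply T1 U)"
  by (rule tensor_ext_linear[OF clinear_comp[OF clinear_tapply[OF bil_T1] lin_L0] clinear_comp[OF lin_DL clinear_tapply[OF bil_T1]]])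
     (simp add: M_b)
lemma T1_R1: "tapply T1 (R1 d U) = R1 d (tapply T1 U)"
  by (rule tensor_ext_linear[OF clinear_comp[OF clinear_tapply[OF bil_T1] lin_R1] clinear_comp[OF lin_R1 clinear_tapply[OF bil_T1]]])
     (simp add: M_h)

lemma tapply_m_L0: "tapply m (L0 a U) = m a (tapply m U)"
  by (simp add: tapply_L0 bil assoc linear_tapply_outer[OF lin_r])
lemma tapply_m_R1: "tapply m (R1 a U) = m (tapply m U) a"
  by (simp add: tapply_R1 bil assoc linear_tapply_outer[OF lin_l])

lemma rslice_eps_DL: "rslice eps (DL a Z) = m a (rslice eps Z)"
proof -
  have "DL a Z = tapply T1 (L0 a (T1i Z))" by (simp add: T1_L0)
  then show ?thesis by (simp add: rslice_eps_T1U tapply_m_L0 rslice_eps_T1U[of "T1i Z", symmetric])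
qed

lemma rslice_eps_T3: "rslice eps (T3 a x) = cscale (eps x) a"
proof (rule eq_by_right)
  fix y
  have "m (rslice eps (T3 a x)) y = rslice eps (R1 y (T3 a x))" by (simp add: rslice_R1)
  also have "\<dots> = rslice eps (DL a (tprod x y))" by (simp add: M_d')
  also have "\<dots> = m (cscale (eps x) a) y" by (simp add: rslice_eps_DL scale_r scale_l)
  finally show "m (rslice eps (T3 a x)) y = m (cscale (eps x) a) y" .
qed

lemma lslice_eps_T3: "lslice eps (T3 a x) = m a x"
proof (rule eq_by_left)
  fix y
  have "m y (lslice eps (T3 a x)) = lslice eps (L0 y (T3 a x))" by (simp add: lslice_L0)
  also have "\<dots> = lslice eps (R0 x (T2 y a))" by (simp add: M_g)
  also have "\<dots> = m y (m a x)" by (simp add: lslice_R0 cu2 assoc)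
  finally show "m y (lslice eps (T3 a x)) = m y (m a x)" .
qed

lemma eps_mult: "eps (m a x) = eps a * eps x"
proof -
  have "eps (m a x) = eps (lslice eps (T3 a x))" by (simp add: lslice_eps_T3)
  also have "\<dots> = eps (rslice eps (T3 a x))" using lslice_rslice_swap[OF lin_eps lin_eps] by simp
  also have "\<dots> = eps a * eps x" by (simp add: rslice_eps_T3 clinear_scale)
  finally show ?thesis .
qed

definition Lam where "Lam X = rslice eps (T1i X)"

lemma lin_Lam[lin,simp]: "clinear Lam" unfolding Lam_def by (intro lin)
lemma lin_Lam_c[lin]: "clinear P \<Longrightarrow> clinear (\<lambda>x. Lam (P x))" by (rule clinear_comp[OF lin_Lam])
lemma Lam_T1U: "Lam (tapply T1 U) = rslice eps U" by (simp add: Lam_def)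
lemma Lam_T1: "Lam (T1 b c) = cscale (eps b) c"
  using Lam_T1U[of "tprod b c"] by (simp add: lin)

lemma T1i_R1: "T1i (R1 d X) = R1 d (T1i X)"
  using T1i_T1[of "R1 d (T1i X)"] by (simp add: T1_R1)
lemma T1i_DL: "T1i (DL w X) = L0 w (T1i X)"
  using T1i_T1[of "L0 w (T1i X)"] by (simp add: T1_L0)

lemma Lam_R1: "Lam (R1 d X) = m (Lam X) d"
  by (simp add: Lam_def T1i_R1 rslice_R1)

lemma rslice_eps_L0: "rslice eps (L0 w U) = cscale (eps w) (rslice eps U)"
  by (rule tensor_ext_linear[OF clinear_comp[OF clinear_rslice lin_L0] clinear_fun_scale[OF clinear_rslice]])
     (simp_all add: eps_mult cscale_cscale)

lemma I2: "Lam (DL w Z) = cscale (eps w) (Lam Z)"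
  by (simp add: Lam_def T1i_DL rslice_eps_L0)

lemma I3: "tapply (\<lambda>\<alpha> \<beta>. m \<alpha> (Lam (tprod \<beta> c))) (T2 e a) = cscale (eps a) (m e c)"
proof -
  define LHS3 where "LHS3 W = tapply (\<lambda>a c. tapply (\<lambda>\<alpha> \<beta>. m \<alpha> (Lam (tprod \<beta> c))) (T2 e a)) W" for W
  define RHS3 where "RHS3 W = m e (rslice eps W)" for W
  have bil_in: "cbilinear (\<lambda>\<alpha> \<beta>. m \<alpha> (Lam (tprod \<beta> c)))" for c
    by (intro cbilinearI lin)
  have bil_in2: "cbilinear (\<lambda>\<alpha> \<beta>. tprod \<alpha> (Lam (tprod \<beta> c)))" for c
    by (intro cbilinearI lin)
  have bil_out: "cbilinear (\<lambda>a c. tapply (\<lambda>\<alpha> \<beta>. m \<alpha> (Lam (tprod \<beta> c))) (T2 e a))"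
    by (intro cbilinearI clinear_tapply_param lin bil_in)
  have l3: "clinear LHS3" unfolding LHS3_def by (rule clinear_tapply[OF bil_out])
  have r3: "clinear RHS3" unfolding RHS3_def by (intro lin)
  have onT1: "LHS3 (T1 b d) = RHS3 (T1 b d)" for b d
  proof -
    define Z1 where "Z1 = tapply (\<lambda>p q. tapply (\<lambda>\<alpha> \<beta>. tprod \<alpha> (Lam (tprod \<beta> q))) (T2 e p)) (T1 b d)"
    define Z2 where "Z2 = tapply (\<lambda>u v. tprod u (Lam (T1 v d))) (T2 e b)"
    have Z12: "Z1 = Z2"
    proof (rule tensor_eq_rslices)
      fix f :: "'a \<Rightarrow> complex" assume f: "clinear f"
      have "rslice f Z1 = tapply (\<lambda>p q. tapply (\<lambda>\<alpha> \<beta>. cscale (f \<alpha>) (Lam (tprod \<beta> q))) (T2 e p)) (T1 b d)"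
        unfolding Z1_def by (simp add: rslice_tapply f)
      also have "\<dots> = tapply (\<lambda>p q. Lam (tprod (rslice f (T2 e p)) q)) (T1 b d)"
        unfolding rslice_def
        by (rule tapply_cong) (simp add: linear_tapply_outer[OF clinear_comp[OF lin_Lam clinear_tprod_l]]
            tprod_scale_l clinear_scale[OF lin_Lam])
      also have "\<dots> = Lam (tapply (\<lambda>p q. tprod (rslice f (T2 e p)) q) (T1 b d))"
        by (rule linear_tapply_outer[OF lin_Lam, symmetric])
      also have "\<dots> = Lam (T1 (rslice f (T2 e b)) d)" by (simp add: CA_f[OF f])
      also have "\<dots> = rslice f Z2"
        unfolding Z2_def rslice_def
        by (simp add: linear_tapply_outer[OF clinear_comp[OF lin_Lam lin_T1a]] linear_tapply_outer[OF lin_Lam]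
            clinear_scale[OF lin_Lam] clinear_scale[OF lin_T1a] rslice_tapply f tapply_tapply[OF cbilinear_rslice_fun[OF f]] lin)
      finally show "rslice f Z1 = rslice f Z2" .
    qed
    have "LHS3 (T1 b d) = tapply m Z1"
      unfolding LHS3_def Z1_def by (simp add: tapply_tapply[OF bil] bil_in2 bil)
    also have "\<dots> = tapply m Z2" by (simp add: Z12)
    also have "\<dots> = tapply (\<lambda>u v. m u (cscale (eps v) d)) (T2 e b)"
      unfolding Z2_def by (simp add: tapply_tapply[OF bil] bil Lam_T1)
    also have "\<dots> = m (lslice eps (T2 e b)) d"
      unfolding lslice_def by (simp add: linear_tapply_outer[OF lin_l] scale_r scale_l)
    also have "\<dots> = RHS3 (T1 b d)" by (simp add: RHS3_def cu2 cu1 assoc)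
    finally show ?thesis .
  qed
  have all: "LHS3 W = RHS3 W" for W
  proof -
    have "LHS3 W = LHS3 (tapply T1 (T1i W))" by simp
    also have "\<dots> = tapply (\<lambda>b d. LHS3 (T1 b d)) (T1i W)" by (rule linear_tapply_outer[OF l3])
    also have "\<dots> = tapply (\<lambda>b d. RHS3 (T1 b d)) (T1i W)" by (simp add: onT1)
    also have "\<dots> = RHS3 (tapply T1 (T1i W))" by (rule linear_tapply_outer[OF r3, symmetric])
    finally show ?thesis by simp
  qed
  show ?thesis using all[of "tprod a c"] by (simp add: LHS3_def RHS3_def bil_out scale_r)
qed

end


context rmha
begin

lemma I4: "Lam (tprod (m g \<beta>) c) = Lam (tprod \<beta> (Lam (tprod g c)))"
proof -
  define U where "U = T1i (tprod g c)"
  have "tprod (m g \<beta>) c = R0 \<beta> (tapply T1 U)" by (simp add: U_def)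
  also have "\<dots> = tapply (\<lambda>u u'. R0 \<beta> (T1 u u')) U" by (rule linear_tapply_outer[OF lin_R0])
  also have "\<dots> = tapply (\<lambda>u u'. DL u (tprod \<beta> u')) U" by (simp add: M_d)
  finally have e: "tprod (m g \<beta>) c = tapply (\<lambda>u u'. DL u (tprod \<beta> u')) U" .
  have "Lam (tprod (m g \<beta>) c) = tapply (\<lambda>u u'. Lam (DL u (tprod \<beta> u'))) U"
    by (simp add: e linear_tapply_outer[OF lin_Lam])
  also have "\<dots> = tapply (\<lambda>u u'. cscale (eps u) (Lam (tprod \<beta> u'))) U" by (simp add: I2)
  also have "\<dots> = Lam (tprod \<beta> (rslice eps U))"
    unfolding rslice_def
    by (simp add: linear_tapply_outer[OF clinear_comp[OF lin_Lam clinear_tprod_r]] tprod_scale_r clinear_scale[OF lin_Lam])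
  also have "\<dots> = Lam (tprod \<beta> (Lam (tprod g c)))" by (simp add: Lam_def U_def)
  finally show ?thesis .
qed

lemma bil_mLam[lin, simp]: "cbilinear (\<lambda>p1 p2. m p1 (Lam (tprod p2 c)))"
  by (intro cbilinearI lin)

lemma I1: "tapply (\<lambda>p1 p2. m p1 (Lam (tprod p2 c))) (T4 g a) = cscale (eps a) (Lam (tprod g c))"
proof (rule eq_by_left)
  fix e
  have "m e (tapply (\<lambda>p1 p2. m p1 (Lam (tprod p2 c))) (T4 g a))
      = tapply (\<lambda>p1 p2. m (m e p1) (Lam (tprod p2 c))) (T4 g a)"
    by (simp add: linear_tapply_outer[OF lin_r] assoc)
  also have "\<dots> = tapply (\<lambda>p1 p2. m p1 (Lam (tprod p2 c))) (L0 e (T4 g a))"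
    by (simp add: tapply_L0)
  also have "\<dots> = tapply (\<lambda>p1 p2. m p1 (Lam (tprod p2 c))) (L1 g (T2 e a))" by (simp add: M_e)
  also have "\<dots> = tapply (\<lambda>\<alpha> \<beta>. m \<alpha> (Lam (tprod (m g \<beta>) c))) (T2 e a)" by (simp add: tapply_L1)
  also have "\<dots> = tapply (\<lambda>\<alpha> \<beta>. m \<alpha> (Lam (tprod \<beta> (Lam (tprod g c))))) (T2 e a)" by (simp add: I4)
  also have "\<dots> = cscale (eps a) (m e (Lam (tprod g c)))" by (rule I3)
  also have "\<dots> = m e (cscale (eps a) (Lam (tprod g c)))" by (simp add: scale_r)
  finally show "m e (tapply (\<lambda>p1 p2. m p1 (Lam (tprod p2 c))) (T4 g a)) = m e (cscale (eps a) (Lam (tprod g c)))" .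
qed

lemma Lam_surj: "\<exists>W. Lam W = x"
proof (cases "\<exists>p. eps p \<noteq> 0")
  case True
  then obtain p where p: "eps p \<noteq> 0" by blast
  show ?thesis by (rule exI[of _ "T1 p (cscale (1 / eps p) x)"]) (simp add: Lam_T1 scale_r cscale_cscale p clinear_scale lin_T1b)
next
  case False
  then have z: "rslice eps X = 0" for X
    by (simp add: rslice_def tapply_def)
  have "m a b = 0" for a b using cu1[of a b] z[of "T1 a b"] by simp
  then have "x = 0" using nd_l by blast
  then show ?thesis by (intro exI[of _ 0]) (simp add: clinear_0[OF lin_Lam])
qed

end


lemma sum_list_tapply: "(\<Sum>x\<leftarrow>xs. tapply (F x) t) = tapply (\<lambda>v w. \<Sum>x\<leftarrow>xs. F x v w) t"
  unfolding tapply_def by (simp add: split_def sum_list_swap[of _ xs])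

locale modA = rmha m \<Delta> for m :: "'a::cvec \<Rightarrow> 'a \<Rightarrow> 'a" and \<Delta> +
  fixes mR :: "'r::cvec \<Rightarrow> 'r \<Rightarrow> 'r" and act :: "'a \<Rightarrow> 'r \<Rightarrow> 'r"
  assumes ma: "module_algebra m \<Delta> mR act"

sublocale modA \<subseteq> R: nalg mR
  using ma by unfold_locales (simp_all add: module_algebra_def)

context modA
begin

lemma bil_act[lin, simp]: "cbilinear act" using ma by (simp add: module_algebra_def left_module_def)
lemma act_m: "act (m a a') x = act a (act a' x)" using ma by (simp add: module_algebra_def left_module_def)
lemma unital: "\<exists>ps. x = (\<Sum>(a, y)\<leftarrow>ps. act a y)" using ma by (simp add: module_algebra_def unital_action_def)
lemma mod_id: "act a (mR x (\<Sum>(c, y)\<leftarrow>cs. act c y)) = (\<Sum>(c, y)\<leftarrow>cs. tapply (\<lambda>p q. mR (act p x) (act q y)) (T1 a c))"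
  using ma unfolding module_algebra_def by blast
lemma mod_id1: "act a (mR x (act c y)) = tapply (\<lambda>p q. mR (act p x) (act q y)) (T1 a c)"
  using mod_id[of a x "[(c, y)]"] by simp

lemma lin_act_l[lin]: "clinear (\<lambda>a. act a y)" by (rule cbilinear_l[OF bil_act])
lemma lin_act_r[lin]: "clinear (act a)" by (rule cbilinear_r[OF bil_act])
lemma lin_act_l_c[lin]: "clinear P \<Longrightarrow> clinear (\<lambda>x. act (P x) y)" by (rule clinear_comp[OF lin_act_l])
lemma lin_act_r_c[lin]: "clinear P \<Longrightarrow> clinear (\<lambda>x. act a (P x))" by (rule clinear_comp[OF lin_act_r])
lemma lin_mR_l_c[lin]: "clinear P \<Longrightarrow> clinear (\<lambda>x. mR (P x) y)" by (rule clinear_comp[OF R.lin_l])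
lemma lin_mR_r_c[lin]: "clinear P \<Longrightarrow> clinear (\<lambda>x. mR y (P x))" by (rule clinear_comp[OF R.lin_r])
lemma act_0l[simp]: "act 0 y = 0" by (rule clinear_0[OF lin_act_l])
lemma act_0r[simp]: "act a 0 = 0" by (rule clinear_0[OF lin_act_r])

declare R.bil[simp]

lemma AY:
  assumes y0: "\<And>e. act e y = 0"
  shows "y = 0"
proof -
  obtain cs where cs: "y = (\<Sum>(c, z)\<leftarrow>cs. act c z)" using unital by blast
  have key: "cscale (eps (m f b)) y = 0" for f b
  proof -
    define Z where "Z = (\<Sum>(c, z)\<leftarrow>cs. tapply (\<lambda>u v. tprod u (act v z)) (T1 b c))"
    have bZ: "cbilinear (\<lambda>u v. tprod u (act v z))" for z by (intro lin)
    have Z0: "Z = 0"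
    proof (rule tensor_inj_left[of "\<lambda>g u. m g u"])
      show "clinear (m g)" for g by (rule lin_r)
      show "v = 0" if "\<And>g. m g v = 0" for v using nd_r that by blast
      fix g
      have "tapply (\<lambda>v w. tprod (m g v) w) Z = (\<Sum>(c, z)\<leftarrow>cs. tapply (\<lambda>u v. tprod (m g u) (act v z)) (T1 b c))"
        unfolding Z_def
        by (simp add: clinear_sum_list[OF clinear_tapply[OF bil_L0[unfolded L0_def]]] split_def
            tapply_tapply lin bZ)
      also have "\<dots> = (\<Sum>(c, z)\<leftarrow>cs. tapply (\<lambda>u v. tprod u (act v z)) (L0 g (T1 b c)))"
        by (simp add: tapply_L0 bZ)
      also have "\<dots> = (\<Sum>(c, z)\<leftarrow>cs. tapply (\<lambda>u v. tprod u (act (m v c) z)) (T2 g b))"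
        by (simp add: M_a tapply_R1 bZ)
      also have "\<dots> = tapply (\<lambda>u v. \<Sum>(c, z)\<leftarrow>cs. tprod u (act (m v c) z)) (T2 g b)"
        by (simp add: sum_list_tapply split_def)
      also have "\<dots> = tapply (\<lambda>u v. tprod u (act v y)) (T2 g b)"
        by (rule tapply_cong)
           (simp add: cs clinear_sum_list[OF clinear_tprod_r, symmetric] clinear_sum_list[OF lin_act_r] split_def act_m)
      also have "\<dots> = 0" by (simp add: y0)
      finally show "tapply (\<lambda>v w. tprod (m g v) w) Z = 0" .
    qed
    have bb: "cbilinear (\<lambda>u r. act (Lam (T3 f u)) r)" by (intro cbilinearI lin)
    have "cscale (eps (m f b)) y = (\<Sum>(c, z)\<leftarrow>cs. act (Lam (T1 (m f b) c)) z)"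
      by (simp add: cs Lam_T1 cscale_sum_list split_def clinear_scale[OF lin_act_l])
    also have "\<dots> = (\<Sum>(c, z)\<leftarrow>cs. tapply (\<lambda>u v. act (Lam (T3 f u)) (act v z)) (T1 b c))"
    proof (rule sum_list_split_cong)
      fix c z
      have "T1 (m f b) c = tapply (\<lambda>u v. R1 v (T3 f u)) (T1 b c)"
        by (simp add: M_b[symmetric] M_d'[symmetric] linear_tapply_outer[OF lin_DL, symmetric] tapply_tprod_self)
      then have "act (Lam (T1 (m f b) c)) z = tapply (\<lambda>u v. act (Lam (R1 v (T3 f u))) z) (T1 b c)"
        by (simp add: linear_tapply_outer[OF lin_act_l_c[OF lin_Lam]])
      also have "\<dots> = tapply (\<lambda>u v. act (Lam (T3 f u)) (act v z)) (T1 b c)"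
        by (simp add: Lam_R1 act_m)
      finally show "act (Lam (T1 (m f b) c)) z = tapply (\<lambda>u v. act (Lam (T3 f u)) (act v z)) (T1 b c)" .
    qed
    also have "\<dots> = tapply (\<lambda>u r. act (Lam (T3 f u)) r) Z"
    proof -
      show ?thesis unfolding Z_def
        by (simp add: clinear_sum_list[OF clinear_tapply[OF bb]] split_def tapply_tapply[OF bb] bZ bb)
    qed
    also have "\<dots> = 0" using Z0 by (simp add: bb)
    finally show ?thesis .
  qed
  show ?thesis
  proof (cases "\<exists>p. eps p \<noteq> 0")
    case True
    then obtain p where p: "eps p \<noteq> 0" by blast
    have "cscale (eps (m p p)) y = 0" by (rule key)
    then show ?thesis using p by (simp add: eps_mult)
  next
    case False
    then have z: "rslice eps X = 0" for X by (simp add: rslice_def tapply_def)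
    have mz: "m a b = 0" for a b using cu1[of a b] z[of "T1 a b"] by simp
    have za: "a = 0" for a :: 'a by (rule nd_l) (simp add: mz)
    have "act (fst p) (snd p) = 0" for p :: "'a \<times> 'r" using za[of "fst p"] by simp
    then show ?thesis by (simp add: cs split_def sum_list_0)
  qed
qed

lemma AY_tensor:
  fixes Y :: "('r, 'b::cvec) tensor"
  assumes "\<And>e. tapply (\<lambda>y b. tprod (act e y) b) Y = 0"
  shows "Y = 0"
  by (rule tensor_inj_left[of act]) (simp_all add: lin AY assms)

end


lemma retained:
  fixes Z :: "('u::cvec, 'a::cvec) tensor" and B :: "'u \<Rightarrow> 'y::cvec \<Rightarrow> 'c::cvec"
  assumes Blin: "\<And>u. clinear (B u)" and data: "\<And>y. tapply (\<lambda>u r. tprod (B u y) r) Z = 0"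
    and rho: "clinear \<rho>"
  shows "tapply (\<lambda>u r. B u (\<rho> r)) Z = 0"
proof -
  obtain ps where ps: "\<forall>p\<in>set ps. clinear (fst p)" "\<forall>v\<in>snd ` set (trep Z). v = (\<Sum>(f, e)\<leftarrow>ps. cscale (f v) e)"
    using fin_coord[of "snd ` set (trep Z)"] by auto
  have "tapply (\<lambda>u r. B u (\<rho> r)) Z = (\<Sum>(u, r)\<leftarrow>trep Z. \<Sum>(f, e)\<leftarrow>ps. cscale (f r) (B u (\<rho> e)))"
    unfolding tapply_def
  proof (rule sum_list_split_cong)
    fix u r assume ur: "(u, r) \<in> set (trep Z)"
    then have "r = (\<Sum>(f, e)\<leftarrow>ps. cscale (f r) e)" using ps(2) by force
    then have "B u (\<rho> r) = B u (\<rho> (\<Sum>(f, e)\<leftarrow>ps. cscale (f r) e))" by simp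
    also have "\<dots> = (\<Sum>(f, e)\<leftarrow>ps. cscale (f r) (B u (\<rho> e)))"
      by (simp add: clinear_sum_list[OF clinear_comp[OF Blin rho]] split_def clinear_scale[OF clinear_comp[OF Blin rho]])
    finally show "B u (\<rho> r) = (\<Sum>(f, e)\<leftarrow>ps. cscale (f r) (B u (\<rho> e)))" .
  qed
  also have "\<dots> = (\<Sum>(f, e)\<leftarrow>ps. \<Sum>(u, r)\<leftarrow>trep Z. cscale (f r) (B u (\<rho> e)))"
    by (simp add: split_def sum_list_swap[of _ "trep Z" ps])
  also have "\<dots> = (\<Sum>(f, e)\<leftarrow>ps. lslice f (tapply (\<lambda>u r. tprod (B u (\<rho> e)) r) Z))"
  proof (rule sum_list_split_cong)
    fix f e assume "(f, e) \<in> set ps"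
    then have f: "clinear f" using ps(1) by force
    show "(\<Sum>(u, r)\<leftarrow>trep Z. cscale (f r) (B u (\<rho> e))) = lslice f (tapply (\<lambda>u r. tprod (B u (\<rho> e)) r) Z)"
      by (simp add: lslice_tapply f) (simp add: tapply_def)
  qed
  also have "\<dots> = (\<Sum>p\<leftarrow>ps. 0)"
    unfolding split_def by (rule sum_list_cong) (use ps(1) in \<open>simp add: data\<close>)
  also have "\<dots> = 0" by (rule sum_list_0)
  finally show ?thesis .
qed

context modA
begin

abbreviation "SM \<equiv> smash_mult m \<Delta> mR act"

lemma bil_F0[lin, simp]: "cbilinear (\<lambda>p q. tprod (mR x (act p x')) q)"
  by (intro cbilinearI lin)
lemma bil_F1[lin, simp]: "cbilinear (\<lambda>x' a'. tapply (\<lambda>p q. tprod (mR x (act p x')) q) (T1 a a'))"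
  by (intro cbilinearI clinear_tapply_param lin)
lemma bil_F2[lin, simp]: "cbilinear (\<lambda>x a. tapply (\<lambda>x' a'. tapply (\<lambda>p q. tprod (mR x (act p x')) q) (T1 a a')) Y)"
  by (intro cbilinearI clinear_tapply_param lin)

lemma SM_def': "SM X Y = tapply (\<lambda>x a. tapply (\<lambda>x' a'. tapply (\<lambda>p q. tprod (mR x (act p x')) q) (T1 a a')) Y) X"
  by (simp add: smash_mult_def)
lemma SM_tprod_l: "SM (tprod x a) Y = tapply (\<lambda>x' a'. tapply (\<lambda>p q. tprod (mR x (act p x')) q) (T1 a a')) Y"
  by (simp add: SM_def')
lemma SM_tprod: "SM (tprod x a) (tprod x' a') = tapply (\<lambda>p q. tprod (mR x (act p x')) q) (T1 a a')"
  by (simp add: SM_tprod_l)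
lemma lin_SM_l[lin]: "clinear (\<lambda>X. SM X Y)" unfolding SM_def' by (intro lin)
lemma lin_SM_r[lin]: "clinear (SM X)" unfolding SM_def' by (intro clinear_tapply_param lin)
lemma bil_SM[lin, simp]: "cbilinear SM" by (intro cbilinearI lin_SM_r lin_SM_l)

lemma SM_assoc_elem:
  "SM (SM (tprod x a) (tprod x' a')) (tprod x'' a'') = SM (tprod x a) (SM (tprod x' a') (tprod x'' a''))"
  (is "?L = ?R")
proof (rule tensor_eq_lslices)
  fix g :: "'a \<Rightarrow> complex" assume g: "clinear g"
  define \<psi> where "\<psi> p p' = mR (mR x (act p x')) (act p' x'')" for p p'
  have bpsi: "cbilinear \<psi>" unfolding \<psi>_def by (intro cbilinearI lin)
  have psi_ls: "\<psi> p (lslice g W) = tapply (\<lambda>p' q'. cscale (g q') (\<psi> p p')) W" for p W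
    unfolding lslice_def by (simp add: linear_tapply_outer[OF cbilinear_r[OF bpsi]] clinear_scale[OF cbilinear_r[OF bpsi]])
  have "lslice g ?L = lslice g (tapply (\<lambda>p q. SM (tprod (mR x (act p x')) q) (tprod x'' a'')) (T1 a a'))"
    by (simp add: SM_tprod linear_tapply_outer[OF lin_SM_l])
  also have "\<dots> = tapply (\<lambda>p q. tapply (\<lambda>p' q'. cscale (g q') (\<psi> p p')) (T1 q a'')) (T1 a a')"
    by (simp add: SM_tprod lslice_tapply g \<psi>_def)
  also have "\<dots> = tapply (\<lambda>p q. \<psi> p (lslice g (T1 q a''))) (T1 a a')"
    by (simp add: psi_ls)
  also have "\<dots> = tapply \<psi> (tapply (\<lambda>p q. tprod p (lslice g (T1 q a''))) (T1 a a'))"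
    by (simp add: tapply_tapply[OF bpsi] bpsi)
  also have "\<dots> = tapply \<psi> (tapply (\<lambda>r s. T1 (lslice g (T1 a s)) r) (T1 a' a''))"
    by (simp add: EL_ER[OF g])
  also have "\<dots> = tapply (\<lambda>r s. tapply \<psi> (T1 (lslice g (T1 a s)) r)) (T1 a' a'')"
    by (rule tapply_tapply[OF bpsi])
  also have "\<dots> = tapply (\<lambda>r s. tapply (\<lambda>p q. cscale (g q) (tapply \<psi> (T1 p r))) (T1 a s)) (T1 a' a'')"
    unfolding lslice_def
    by (rule tapply_cong)
       (simp add: linear_tapply_outer[OF clinear_comp[OF clinear_tapply[OF bpsi] lin_T1a]]
        clinear_scale[OF clinear_comp[OF clinear_tapply[OF bpsi] lin_T1a]])
  also have "\<dots> = tapply (\<lambda>r s. tapply (\<lambda>p q. cscale (g q) (mR x (act p (mR x' (act r x''))))) (T1 a s)) (T1 a' a'')"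
    by (simp add: mod_id1 \<psi>_def[abs_def] linear_tapply_outer[OF R.lin_r] R.assoc)
  also have "\<dots> = lslice g ?R"
    by (simp add: SM_tprod linear_tapply_outer[OF lin_SM_r] lslice_tapply g)
  finally show "lslice g ?L = lslice g ?R" .
qed

lemma SM_assoc: "SM (SM X Y) Z = SM X (SM Y Z)"
proof -
  have step3: "SM (SM (tprod x a) (tprod x' a')) Z = SM (tprod x a) (SM (tprod x' a') Z)" for x a x' a' Z
    by (rule tensor_ext_linear[OF lin_SM_r clinear_comp[OF lin_SM_r lin_SM_r]]) (rule SM_assoc_elem)
  have step2: "SM (SM (tprod x a) Y) Z = SM (tprod x a) (SM Y Z)" for x a Y
    by (rule tensor_ext_linear[OF clinear_comp[OF lin_SM_l lin_SM_r] clinear_comp[OF lin_SM_r lin_SM_l]]) (rule step3)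
  show ?thesis
    by (rule tensor_ext_linear[OF clinear_comp[OF lin_SM_l lin_SM_l] lin_SM_l]) (rule step2)
qed

end


context modA
begin

lemma SM_nd_right:
  assumes Y0: "\<And>X. SM X Y = 0"
  shows "Y = 0"
proof -
  define Q where "Q a = tapply (\<lambda>y b. tapply (\<lambda>p q. tprod (act p y) q) (T1 a b)) Y" for a
  have bQ: "cbilinear (\<lambda>p q. tprod (act p y) q)" for y by (intro cbilinearI lin)
  have bQ2: "cbilinear (\<lambda>z q. tprod (mR x z) q)" for x by (intro cbilinearI lin)
  have bQ3: "cbilinear (\<lambda>z q. tprod (act e z) q)" for e by (intro cbilinearI lin)
  have Q0: "Q a = 0" for a
  proof (rule tensor_inj_left[of "\<lambda>x z. mR x z"])
    show "clinear (mR x)" for x by (rule R.lin_r)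
    show "v = 0" if "\<And>x. mR x v = 0" for v using R.nd_r that by blast
    fix x
    have "tapply (\<lambda>z q. tprod (mR x z) q) (Q a) = SM (tprod x a) Y"
      unfolding Q_def SM_tprod_l
      by (simp add: tapply_tapply[OF bQ2] bQ2 bQ)
    then show "tapply (\<lambda>z q. tprod (mR x z) q) (Q a) = 0" using Y0 by simp
  qed
  define Q' where "Q' W = tapply (\<lambda>y b. tapply (\<lambda>p q. tprod (act p y) q) (R1 b W)) Y" for W
  have lQ': "clinear Q'" unfolding Q'_def by (intro clinear_tapply_param lin bQ)
  have Q'T2: "Q' (T2 e a) = 0" for e a
  proof -
    have "Q' (T2 e a) = tapply (\<lambda>y b. tapply (\<lambda>p q. tprod (act p y) q) (L0 e (T1 a b))) Y"
      unfolding Q'_def by (simp add: M_a)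
    also have "\<dots> = tapply (\<lambda>z q. tprod (act e z) q) (Q a)"
      unfolding Q_def by (simp add: tapply_tapply[OF bQ3] bQ3 bQ tapply_L0 act_m)
    also have "\<dots> = 0" by (simp add: Q0 bQ3)
    finally show ?thesis .
  qed
  have Q'all: "Q' W = 0" for W
  proof -
    have "Q' W = Q' (tapply T2 (T2i W))" by simp
    also have "\<dots> = tapply (\<lambda>e a. Q' (T2 e a)) (T2i W)" by (rule linear_tapply_outer[OF lQ'])
    also have "\<dots> = 0" by (simp add: Q'T2)
    finally show ?thesis .
  qed
  show ?thesis
  proof (rule AY_tensor)
    fix e
    show "tapply (\<lambda>y b. tprod (act e y) b) Y = 0"
    proof (rule tensor_inj_right[of "\<lambda>g w. m g w"])
      show "clinear (m g)" for g by (rule lin_r)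
      show "v = 0" if "\<And>g. m g v = 0" for v using nd_r that by blast
      fix g
      have "tapply (\<lambda>v w. tprod v (m g w)) (tapply (\<lambda>y b. tprod (act e y) b) Y) = Q' (tprod e g)"
        unfolding Q'_def by (simp add: tapply_tapply[OF bil_L1[unfolded L1_def]] lin bQ)
      then show "tapply (\<lambda>v w. tprod v (m g w)) (tapply (\<lambda>y b. tprod (act e y) b) Y) = 0"
        using Q'all by simp
    qed
  qed
qed

end


context modA
begin

lemma SM_nd_left:
  assumes X0: "\<And>Y. SM X Y = 0"
  shows "X = 0"
proof -
  define \<Theta> :: "'r \<Rightarrow> 'r \<Rightarrow> ('a, 'a) tensor \<Rightarrow> ('r, 'a) tensor" where "\<Theta> x y W = tapply (\<lambda>p q. tprod (mR x (act p y)) q) W" for x y W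
  have lTh: "clinear (\<Theta> x y)" for x y unfolding \<Theta>_def by (intro lin)
  have lTh_y: "clinear (\<lambda>y. \<Theta> x y W)" for x W unfolding \<Theta>_def by (intro clinear_tapply_param lin)
  have D: "tapply (\<lambda>x a. \<Theta> x y (T1 a b)) X = 0" for y b
    using X0[of "tprod y b"] by (simp add: SM_def' \<Theta>_def)
  have e2: "\<Theta> x y (tapply (\<lambda>p q. tprod p (\<Gamma> q)) W) = tapply (\<lambda>z q. tprod z (\<Gamma> q)) (\<Theta> x y W)"
    if G: "clinear \<Gamma>" for x y W and \<Gamma> :: "'a \<Rightarrow> 'a"
    by (rule tensor_ext_linear[OF clinear_comp[OF lTh clinear_tapply] clinear_comp[OF clinear_tapply lTh]])
       (intro lin G, intro lin G, simp add: \<Theta>_def lin G)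
  have Vzero: "tapply (\<lambda>x a. \<Theta> x y (T1 (lslice \<phi> (T1 a h)) g')) X = 0" if phi: "clinear \<phi>" for y \<phi> h g'
  proof -
    define U where "U = T1i (tprod g' h)"
    define \<Gamma> where "\<Gamma> b' q = lslice \<phi> (T1 q b')" for b' q
    have lG: "clinear (\<Gamma> b')" for b' unfolding \<Gamma>_def by (intro lin phi)
    have bG: "cbilinear (\<lambda>p q. tprod p (\<Gamma> b' q))" for b' by (intro cbilinearI lin lG)
    have e1: "T1 (lslice \<phi> (T1 a h)) g' = tapply (\<lambda>b b'. tapply (\<lambda>p q. tprod p (\<Gamma> b' q)) (T1 a b)) U" for a
    proof -
      have bb: "cbilinear (\<lambda>r s. T1 (lslice \<phi> (T1 a s)) r)" by (intro cbilinearI lin phi)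
      have "tapply (\<lambda>b b'. tapply (\<lambda>p q. tprod p (\<Gamma> b' q)) (T1 a b)) U
          = tapply (\<lambda>b b'. tapply (\<lambda>r s. T1 (lslice \<phi> (T1 a s)) r) (T1 b b')) U"
        unfolding \<Gamma>_def by (simp add: EL_ER[OF phi])
      also have "\<dots> = tapply (\<lambda>r s. T1 (lslice \<phi> (T1 a s)) r) (tapply T1 U)"
        by (rule tapply_tapply[OF bb, symmetric])
      also have "\<dots> = T1 (lslice \<phi> (T1 a h)) g'" by (simp add: U_def bb)
      finally show ?thesis by simp
    qed
    have "tapply (\<lambda>x a. \<Theta> x y (T1 (lslice \<phi> (T1 a h)) g')) X
        = tapply (\<lambda>x a. tapply (\<lambda>b b'. \<Theta> x y (tapply (\<lambda>p q. tprod p (\<Gamma> b' q)) (T1 a b))) U) X"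
      by (simp add: e1 linear_tapply_outer[OF lTh])
    also have "\<dots> = tapply (\<lambda>x a. tapply (\<lambda>b b'. tapply (\<lambda>z q. tprod z (\<Gamma> b' q)) (\<Theta> x y (T1 a b))) U) X"
      by (simp add: e2[OF lG])
    also have "\<dots> = tapply (\<lambda>b b'. tapply (\<lambda>x a. tapply (\<lambda>z q. tprod z (\<Gamma> b' q)) (\<Theta> x y (T1 a b))) X) U"
      by (rule tapply_swap)
    also have "\<dots> = tapply (\<lambda>b b'. tapply (\<lambda>z q. tprod z (\<Gamma> b' q)) (tapply (\<lambda>x a. \<Theta> x y (T1 a b)) X)) U"
      by (simp add: linear_tapply_outer[OF clinear_tapply[OF bG]])
    also have "\<dots> = 0" by (simp add: D bG)
    finally show ?thesis .
  qed
  have V2zero: "tapply (\<lambda>x a. \<Theta> x y (T4 g (lslice \<phi> (T1 a h)))) X = 0" if phi: "clinear \<phi>" for y \<phi> h g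
  proof (rule tensor_inj_right[of "\<lambda>g' q. m q g'"])
    show "clinear (\<lambda>q. m q g')" for g' by (rule lin_l)
    show "v = 0" if "\<And>g'. m v g' = 0" for v using nd_l that by blast
    fix g'
    have bR: "cbilinear (\<lambda>z q. tprod z (m q g'))" by (intro cbilinearI lin)
    have bL: "cbilinear (\<lambda>z q. tprod z (m g q))" by (intro cbilinearI lin)
    have "tapply (\<lambda>v w. tprod v (m w g')) (tapply (\<lambda>x a. \<Theta> x y (T4 g (lslice \<phi> (T1 a h)))) X)
        = tapply (\<lambda>x a. tapply (\<lambda>z q. tprod z (m q g')) (\<Theta> x y (T4 g (lslice \<phi> (T1 a h))))) X"
      by (rule tapply_tapply[OF bR])
    also have "\<dots> = tapply (\<lambda>x a. \<Theta> x y (R1 g' (T4 g (lslice \<phi> (T1 a h))))) X"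
      unfolding R1_def by (simp add: e2[OF lin_l])
    also have "\<dots> = tapply (\<lambda>x a. \<Theta> x y (L1 g (T1 (lslice \<phi> (T1 a h)) g'))) X"
      by (simp add: M_f)
    also have "\<dots> = tapply (\<lambda>x a. tapply (\<lambda>z q. tprod z (m g q)) (\<Theta> x y (T1 (lslice \<phi> (T1 a h)) g'))) X"
      unfolding L1_def by (simp add: e2[OF lin_r])
    also have "\<dots> = tapply (\<lambda>z q. tprod z (m g q)) (tapply (\<lambda>x a. \<Theta> x y (T1 (lslice \<phi> (T1 a h)) g')) X)"
      by (rule tapply_tapply[OF bL, symmetric])
    also have "\<dots> = 0" by (simp add: Vzero[OF phi] bL)
    finally show "tapply (\<lambda>v w. tprod v (m w g')) (tapply (\<lambda>x a. \<Theta> x y (T4 g (lslice \<phi> (T1 a h)))) X) = 0" .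
  qed
  define K :: "'r \<Rightarrow> ('r, 'a) tensor" where "K w = tapply (\<lambda>x a. tprod (mR x w) a) X" for w
  have lK: "clinear K" unfolding K_def by (intro clinear_tapply_param lin)
  have K1: "K (act (Lam (tprod g c0)) z0) = 0" for g c0 z0
  proof -
    define w where "w = act (Lam (tprod g c0)) z0"
    have Kh: "tapply (\<lambda>x a. tprod (mR x w) (m a h)) X = 0" for h
    proof (rule tensor_zero_lslices)
      fix \<phi> :: "'a \<Rightarrow> complex" assume phi: "clinear \<phi>"
      define Zc where "Zc = tapply (\<lambda>x a. tapply (\<lambda>p1 p2. tprod (tprod x p1) p2) (T4 g (lslice \<phi> (T1 a h)))) X"
      define B where "B u y = tapply (\<lambda>x p. mR x (act p y)) u" for u y
      define \<rho> where "\<rho> r = act (Lam (tprod r c0)) z0" for r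
      have bB0: "cbilinear (\<lambda>x p. mR x (act p y))" for y by (intro cbilinearI lin)
      have lB: "clinear (B u)" for u unfolding B_def by (intro clinear_tapply_param lin)
      have lBu: "clinear (\<lambda>u. B u y)" for y unfolding B_def by (intro lin bB0)
      have lrho: "clinear \<rho>" unfolding \<rho>_def by (intro lin)
      have bdata: "cbilinear (\<lambda>u r. tprod (B u y) r)" for y by (intro cbilinearI lin lBu)
      have bconc: "cbilinear (\<lambda>u r. B u (\<rho> r))" for y
        by (intro cbilinearI clinear_comp[OF lB lrho] lin lBu)
      have bT: "cbilinear (\<lambda>p1 p2. tprod (tprod x p1) p2)" for x by (intro cbilinearI lin)
      have data: "tapply (\<lambda>u r. tprod (B u y) r) Zc = 0" for y
      proof -
        have "tapply (\<lambda>u r. tprod (B u y) r) Zc = tapply (\<lambda>x a. \<Theta> x y (T4 g (lslice \<phi> (T1 a h)))) X"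
          unfolding Zc_def \<Theta>_def
          by (simp only: tapply_tapply[OF bdata]) (simp add: bdata[unfolded B_def] B_def bB0)
        then show ?thesis using V2zero[OF phi] by simp
      qed
      have conc: "tapply (\<lambda>u r. B u (\<rho> r)) Zc = 0" by (rule retained[OF lB data lrho])
      have inner: "tapply (\<lambda>p1 p2. mR x (act p1 (\<rho> p2))) (T4 g c) = cscale (eps c) (mR x w)" for x c
      proof -
        have "tapply (\<lambda>p1 p2. mR x (act p1 (\<rho> p2))) (T4 g c)
            = mR x (act (tapply (\<lambda>p1 p2. m p1 (Lam (tprod p2 c0))) (T4 g c)) z0)"
          unfolding \<rho>_def
          by (simp add: linear_tapply_outer[OF clinear_comp[OF R.lin_r lin_act_l]] act_m)
        also have "\<dots> = cscale (eps c) (mR x w)"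
          by (simp add: I1 w_def clinear_scale[OF lin_act_l] R.scale_r)
        finally show ?thesis .
      qed
      have "0 = tapply (\<lambda>u r. B u (\<rho> r)) Zc" using conc by simp
      also have "\<dots> = tapply (\<lambda>x a. tapply (\<lambda>p1 p2. mR x (act p1 (\<rho> p2))) (T4 g (lslice \<phi> (T1 a h)))) X"
        unfolding Zc_def by (simp only: tapply_tapply[OF bconc]) (simp add: bconc[unfolded B_def] B_def bB0)
      also have "\<dots> = tapply (\<lambda>x a. cscale (eps (lslice \<phi> (T1 a h))) (mR x w)) X"
        by (simp add: inner)
      also have "\<dots> = tapply (\<lambda>x a. cscale (\<phi> (m a h)) (mR x w)) X"
        by (simp add: lslice_rslice_swap[OF lin_eps phi, symmetric] cu1)
      also have "\<dots> = lslice \<phi> (tapply (\<lambda>x a. tprod (mR x w) (m a h)) X)"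
        by (simp add: lslice_tapply phi)
      finally show "lslice \<phi> (tapply (\<lambda>x a. tprod (mR x w) (m a h)) X) = 0" by simp
    qed
    show ?thesis unfolding w_def[symmetric]
    proof (rule tensor_inj_right[of "\<lambda>h a. m a h"])
      show "clinear (\<lambda>a. m a h)" for h by (rule lin_l)
      show "v = 0" if "\<And>h. m v h = 0" for v using nd_l that by blast
      fix h
      have bb: "cbilinear (\<lambda>v w'. tprod v (m w' h))" by (intro cbilinearI lin)
      show "tapply (\<lambda>v w'. tprod v (m w' h)) (K w) = 0"
        unfolding K_def using Kh[of h] by (simp add: tapply_tapply[OF bb] lin)
    qed
  qed
  have K2: "K (act e z0) = 0" for e z0
  proof -
    obtain W where W: "Lam W = e" using Lam_surj by blast
    have "K (act (Lam W) z0) = 0"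
      by (rule tensor_ext_linear[OF clinear_comp[OF lK lin_act_l_c[OF lin_Lam]] clinear_zero_fun]) (simp add: K1)
    then show ?thesis using W by simp
  qed
  have K3: "K w = 0" for w
  proof -
    obtain ps where ps: "w = (\<Sum>(e, z)\<leftarrow>ps. act e z)" using unital by blast
    have "K w = (\<Sum>(e, z)\<leftarrow>ps. K (act e z))" by (simp add: ps clinear_sum_list[OF lK] split_def)
    also have "\<dots> = 0" by (simp add: K2 split_def sum_list_0)
    finally show ?thesis .
  qed
  show ?thesis
  proof (rule tensor_inj_left[of "\<lambda>w x. mR x w"])
    show "clinear (\<lambda>x. mR x w)" for w by (rule R.lin_l)
    show "v = 0" if "\<And>w. mR v w = 0" for v using R.nd_l that by blast
    fix w show "tapply (\<lambda>v wa. tprod (mR v w) wa) X = 0" using K3[of w] by (simp add: K_def)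
  qed
qed

lemma SM_nondeg: "nondeg SM"
  unfolding nondeg_def using SM_nd_left SM_nd_right by blast

lemma SM_is_alg: "is_alg SM"
  unfolding is_alg_def using bil_SM SM_assoc by blast

end


lemma elem_of_gen: "in_alg m M \<Longrightarrow> M = mult_of m (elem_of m M)"
  unfolding in_alg_def elem_of_def by (rule someI_ex)

locale setting = modA mA \<Delta>A mR act + B: rmha mB \<Delta>B
  for mA :: "'a::cvec \<Rightarrow> 'a \<Rightarrow> 'a" and \<Delta>A and mR :: "'r::cvec \<Rightarrow> 'r \<Rightarrow> 'r" and act
    and mB :: "'b::cvec \<Rightarrow> 'b \<Rightarrow> 'b" and \<Delta>B +
  fixes pr :: "'a \<Rightarrow> 'b \<Rightarrow> complex"
  assumes dp: "dual_pair mA \<Delta>A mB \<Delta>B pr"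
begin

abbreviation "tri \<equiv> tri_BA mA \<Delta>A pr"
abbreviation "triAB \<equiv> tri_AB mB \<Delta>B pr"

lemma bil_pr[lin, simp]: "cbilinear pr" using dp by (simp add: dual_pair_def)
lemma lin_pr_l[lin]: "clinear (\<lambda>a. pr a b)" by (rule cbilinear_l[OF bil_pr])
lemma lin_pr_r[lin]: "clinear (pr a)" by (rule cbilinear_r[OF bil_pr])
lemma lin_pr_l_c[lin]: "clinear P \<Longrightarrow> clinear (\<lambda>x. pr (P x) b)" by (rule clinear_comp[OF lin_pr_l])
lemma lin_pr_r_c[lin]: "clinear P \<Longrightarrow> clinear (\<lambda>x. pr a (P x))" by (rule clinear_comp[OF lin_pr_r])
lemma prA: "(\<And>b. pr a b = 0) \<Longrightarrow> a = 0" using dp unfolding dual_pair_def by blast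
lemma prB: "(\<And>a. pr a b = 0) \<Longrightarrow> b = 0" using dp unfolding dual_pair_def by blast
lemma P1: "pr (tri b a) b' = pr a (mB b' b)" using dp unfolding dual_pair_def by blast
lemma P3: "pr a' (triAB a b) = pr (mA a' a) b" using dp unfolding dual_pair_def by blast
lemma tri_unital: "\<exists>ps. a = (\<Sum>(b, a')\<leftarrow>ps. tri b a')"
  using dp unfolding dual_pair_def unital_action_def by blast
lemma in_alg_r: "in_alg mA (ractM mA \<Delta>A pr b a)" "in_alg mB (ractM mB \<Delta>B (\<lambda>x y. pr y x) a b)"
  using dp unfolding dual_pair_def by blast+

lemma prA_eq: "(\<And>b. pr a b = pr a' b) \<Longrightarrow> a = a'"
  using prA[of "a - a'"] by (simp add: clinear_diff[OF lin_pr_l])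
lemma prB_eq: "(\<And>a. pr a b = pr a b') \<Longrightarrow> b = b'"
  using prB[of "b - b'"] by (simp add: clinear_diff[OF lin_pr_r])

lemma tri_char: "mA (tri b a) c = tapply (\<lambda>p q. cscale (pr q b) p) (T3 a c)"
proof -
  have "ractM mA \<Delta>A pr b a = mult_of mA (tri b a)"
    using elem_of_gen[OF in_alg_r(1)] by (simp add: tri_BA_def)
  then show ?thesis by (simp add: ractM_def mult_of_def fun_eq_iff)
qed

lemma triAB_char: "mB e (triAB a b) = tapply (\<lambda>p q. cscale (pr a q) p) (B.T2 e b)"
proof -
  have "ractM mB \<Delta>B (\<lambda>x y. pr y x) a b = mult_of mB (triAB a b)"
    using elem_of_gen[OF in_alg_r(2)] by (simp add: tri_AB_def)
  then show ?thesis by (simp add: ractM_def mult_of_def fun_eq_iff)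
qed

lemma lin_tri_b[lin]: "clinear (\<lambda>b. tri b a)"
  by (rule clinearI; rule prA_eq)
     (simp_all add: P1 clinear_add[OF lin_pr_l] clinear_scale[OF lin_pr_l] B.add_r B.scale_r
       clinear_add[OF lin_pr_r] clinear_scale[OF lin_pr_r])
lemma lin_tri_a[lin]: "clinear (tri b)"
  by (rule clinearI; rule prA_eq)
     (simp_all add: P1 clinear_add[OF lin_pr_l] clinear_scale[OF lin_pr_l])
lemma lin_tri_b_c[lin]: "clinear P \<Longrightarrow> clinear (\<lambda>x. tri (P x) a)" by (rule clinear_comp[OF lin_tri_b])
lemma lin_tri_a_c[lin]: "clinear P \<Longrightarrow> clinear (\<lambda>x. tri b (P x))" by (rule clinear_comp[OF lin_tri_a])
lemma tri_mod: "tri (mB b b') a = tri b (tri b' a)"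
  by (rule prA_eq) (simp add: P1 B.assoc)

lemma lin_triAB_b[lin]: "clinear (triAB a)"
  by (rule clinearI; rule prB_eq)
     (simp_all add: P3 clinear_add[OF lin_pr_r] clinear_scale[OF lin_pr_r])
lemma lin_triAB_a[lin]: "clinear (\<lambda>a. triAB a b)"
  by (rule clinearI; rule prB_eq)
     (simp_all add: P3 clinear_add[OF lin_pr_r] clinear_scale[OF lin_pr_r] add_r scale_r
       clinear_add[OF lin_pr_l] clinear_scale[OF lin_pr_l])
lemma lin_triAB_b_c[lin]: "clinear P \<Longrightarrow> clinear (\<lambda>x. triAB a (P x))" by (rule clinear_comp[OF lin_triAB_b])
lemma lin_triAB_a_c[lin]: "clinear P \<Longrightarrow> clinear (\<lambda>x. triAB (P x) b)" by (rule clinear_comp[OF lin_triAB_a])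

lemma K: "lslice (\<lambda>v. pr v b') (T1 a a'') = tri (triAB a'' b') a"
proof (rule eq_by_right)
  fix c
  have g: "clinear (\<lambda>v. pr v b')" by (rule lin_pr_l)
  have "mA (lslice (\<lambda>v. pr v b') (T1 a a'')) c = lslice (\<lambda>v. pr v b') (R0 c (T1 a a''))"
    by (simp add: lslice_R0 g)
  also have "\<dots> = lslice (\<lambda>v. pr v b') (R1 a'' (T3 a c))" by (simp add: M_c)
  also have "\<dots> = tapply (\<lambda>p q. cscale (pr (mA q a'') b') p) (T3 a c)"
    unfolding lslice_def by (simp add: tapply_R1 cbilinear_lslice_fun[OF g])
  also have "\<dots> = mA (tri (triAB a'' b') a) c" by (simp add: tri_char P3)
  finally show "mA (lslice (\<lambda>v. pr v b') (T1 a a'')) c = mA (tri (triAB a'' b') a) c" .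
qed

lemma star: "tapply (\<lambda>p q. mB (triAB (tri q a') b'') p) (B.T1 b c) = triAB (tri c a') (mB b'' b)"
proof (rule B.eq_by_left)
  fix e
  have g: "clinear (pr a')" by (rule lin_pr_r)
  have BB: "B.tm (B.T2 e b'') (B.T1 b c) = B.R1 c (B.T2 e (mB b'' b))"
    by (rule B.tm_eq_r) (simp add: B.Tchar)
  have "mB e (tapply (\<lambda>p q. mB (triAB (tri q a') b'') p) (B.T1 b c))
      = tapply (\<lambda>p q. mB (mB e (triAB (tri q a') b'')) p) (B.T1 b c)"
    by (simp add: linear_tapply_outer[OF B.lin_r] B.assoc)
  also have "\<dots> = tapply (\<lambda>p q. tapply (\<lambda>r s. cscale (pr a' (mB s q)) (mB r p)) (B.T2 e b'')) (B.T1 b c)"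
    by (simp add: triAB_char P1 linear_tapply_outer[OF B.lin_l] B.scale_l)
  also have "\<dots> = tapply (\<lambda>r s. tapply (\<lambda>p q. cscale (pr a' (mB s q)) (mB r p)) (B.T1 b c)) (B.T2 e b'')"
    by (rule tapply_swap)
  also have "\<dots> = lslice (pr a') (B.tm (B.T2 e b'') (B.T1 b c))"
    by (simp add: B.tm_def' lslice_tapply g)
  also have "\<dots> = lslice (pr a') (B.R1 c (B.T2 e (mB b'' b)))" by (simp add: BB)
  also have "\<dots> = tapply (\<lambda>r s. cscale (pr a' (mB s c)) r) (B.T2 e (mB b'' b))"
    unfolding lslice_def by (simp add: B.tapply_R1 cbilinear_lslice_fun[OF g])
  also have "\<dots> = mB e (triAB (tri c a') (mB b'' b))" by (simp add: triAB_char P1)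
  finally show "mB e (tapply (\<lambda>p q. mB (triAB (tri q a') b'') p) (B.T1 b c)) = mB e (triAB (tri c a') (mB b'' b))" .
qed

lemma main_AA: "tapply (\<lambda>u v. tprod u (tri b v)) (T1 a (tri c a')) = tapply (\<lambda>p q. T1 (tri p a) (tri q a')) (B.T1 b c)"
  (is "?Z1 = ?Z2")
proof (rule tensor_eq_rslices)
  fix f :: "'a \<Rightarrow> complex" assume f: "clinear f"
  show "rslice f ?Z1 = rslice f ?Z2"
  proof (rule prA_eq)
    fix b''
    have g: "clinear (\<lambda>v. pr v b'')" by (rule lin_pr_l)
    have sw: "pr (rslice f Z) b'' = f (lslice (\<lambda>v. pr v b'') Z)" for Z
      using lslice_rslice_swap[OF f g] by simp
    have "lslice (\<lambda>v. pr v b'') ?Z1 = lslice (\<lambda>v. pr v (mB b'' b)) (T1 a (tri c a'))"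
      unfolding lslice_def by (simp add: tapply_tapply[OF cbilinear_lslice_fun[OF g]] lin P1)
    also have "\<dots> = tri (triAB (tri c a') (mB b'' b)) a" by (rule K)
    also have "\<dots> = tri (tapply (\<lambda>p q. mB (triAB (tri q a') b'') p) (B.T1 b c)) a" by (simp add: star)
    also have "\<dots> = tapply (\<lambda>p q. tri (triAB (tri q a') b'') (tri p a)) (B.T1 b c)"
      by (simp add: linear_tapply_outer[OF lin_tri_b] tri_mod)
    also have "\<dots> = lslice (\<lambda>v. pr v b'') ?Z2"
      by (simp add: lslice_tapply g K)
    finally show "pr (rslice f ?Z1) b'' = pr (rslice f ?Z2) b''" by (simp add: sw)
  qed
qed

end


context setting
begin

abbreviation "SA \<equiv> smash_act mA \<Delta>A pr"

lemma SA_def': "SA b X = tapply (\<lambda>x a. tprod x (tri b a)) X" by (simp add: smash_act_def)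
lemma bil_SA_in[lin, simp]: "cbilinear (\<lambda>x a. tprod x (tri b a))" by (intro cbilinearI lin)
lemma lin_SA_X[lin]: "clinear (SA b)" unfolding SA_def' by (intro lin)
lemma lin_SA_b[lin]: "clinear (\<lambda>b. SA b X)" unfolding SA_def' by (intro clinear_tapply_param lin)
lemma SA_tprod: "SA b (tprod x a) = tprod x (tri b a)" by (simp add: SA_def')
lemma bil_SA: "cbilinear SA" by (intro cbilinearI lin_SA_X lin_SA_b)

lemma SA_mult: "SA (mB b b') X = SA b (SA b' X)"
  by (simp add: SA_def' tapply_tapply tri_mod)

lemma SA_left_module: "left_module mB SA"
  unfolding left_module_def using bil_SA SA_mult by blast

lemma SA_unital: "unital_action SA"
  unfolding unital_action_def
proof
  fix X
  have "\<exists>ps. tsum xs = (\<Sum>(b, Y)\<leftarrow>ps. SA b Y)" for xs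
  proof (induction xs)
    case Nil
    then show ?case by (intro exI[of _ "[]"]) (simp add: tsum_Nil)
  next
    case (Cons p xs)
    obtain x a where p: "p = (x, a)" by fastforce
    obtain ps where ps: "tsum xs = (\<Sum>(b, Y)\<leftarrow>ps. SA b Y)" using Cons by blast
    obtain qs where qs: "a = (\<Sum>(b, a')\<leftarrow>qs. tri b a')" using tri_unital by blast
    have "tprod x a = (\<Sum>(b, a')\<leftarrow>qs. SA b (tprod x a'))"
      by (simp add: qs clinear_sum_list[OF clinear_tprod_r] split_def SA_tprod)
    also have "\<dots> = (\<Sum>(b, Y)\<leftarrow>map (\<lambda>(b, a'). (b, tprod x a')) qs. SA b Y)"
      by (simp add: o_def split_def)
    finally have "tsum (p # xs) = (\<Sum>(b, Y)\<leftarrow>map (\<lambda>(b, a'). (b, tprod x a')) qs @ ps. SA b Y)"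
      by (simp add: p tsum_Cons ps)
    then show ?case by blast
  qed
  from this[of "trep X"] show "\<exists>ps. X = (\<Sum>(b, Y)\<leftarrow>ps. SA b Y)" by simp
qed

lemma SA_SM_single: "SA b (SM X (SA c Y)) = tapply (\<lambda>p q. SM (SA p X) (SA q Y)) (B.T1 b c)"
proof -
  have bH: "cbilinear (\<lambda>p q. SM (SA p X) (SA q Y))" for X Y
    by (intro cbilinearI clinear_comp[OF lin_SM_r lin_SA_b] clinear_comp[OF lin_SM_l lin_SA_b])
  have elem: "SA b (SM (tprod x a) (SA c (tprod y a'))) = tapply (\<lambda>p q. SM (SA p (tprod x a)) (SA q (tprod y a'))) (B.T1 b c)"
    for x a y a'
  proof -
    define \<Phi> where "\<Phi> W = tapply (\<lambda>p q. tprod (mR x (act p y)) q) W" for W :: "('a, 'a) tensor"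
    have lPhi: "clinear \<Phi>" unfolding \<Phi>_def by (intro lin)
    have e2: "tapply (\<lambda>z q. tprod z (tri b q)) (\<Phi> W) = \<Phi> (tapply (\<lambda>u v. tprod u (tri b v)) W)" for W
      by (rule tensor_ext_linear[OF clinear_comp[OF clinear_tapply lPhi] clinear_comp[OF lPhi clinear_tapply]])
         (intro lin, intro lin, simp add: \<Phi>_def lin)
    have "SA b (SM (tprod x a) (SA c (tprod y a'))) = SA b (\<Phi> (T1 a (tri c a')))"
      by (simp add: SA_tprod SM_tprod \<Phi>_def)
    also have "\<dots> = \<Phi> (tapply (\<lambda>u v. tprod u (tri b v)) (T1 a (tri c a')))" by (simp add: SA_def' e2)
    also have "\<dots> = \<Phi> (tapply (\<lambda>p q. T1 (tri p a) (tri q a')) (B.T1 b c))" by (simp add: main_AA)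
    also have "\<dots> = tapply (\<lambda>p q. SM (SA p (tprod x a)) (SA q (tprod y a'))) (B.T1 b c)"
      unfolding \<Phi>_def by (simp add: tapply_tapply SA_tprod SM_tprod)
    finally show ?thesis .
  qed
  have step: "SA b (SM (tprod x a) (SA c Y)) = tapply (\<lambda>p q. SM (SA p (tprod x a)) (SA q Y)) (B.T1 b c)" for x a Y
  proof (rule tensor_ext_linear[of "\<lambda>Y. SA b (SM (tprod x a) (SA c Y))" "\<lambda>Y. tapply (\<lambda>p q. SM (SA p (tprod x a)) (SA q Y)) (B.T1 b c)"])
    show "clinear (\<lambda>Y. SA b (SM (tprod x a) (SA c Y)))"
      by (rule clinear_comp[OF lin_SA_X clinear_comp[OF lin_SM_r lin_SA_X]])
    show "clinear (\<lambda>Y. tapply (\<lambda>p q. SM (SA p (tprod x a)) (SA q Y)) (B.T1 b c))"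
      by (intro clinear_tapply_param clinear_comp[OF lin_SM_r lin_SA_X])
  qed (rule elem)
  show ?thesis
  proof (rule tensor_ext_linear[of "\<lambda>X. SA b (SM X (SA c Y))" "\<lambda>X. tapply (\<lambda>p q. SM (SA p X) (SA q Y)) (B.T1 b c)"])
    show "clinear (\<lambda>X. SA b (SM X (SA c Y)))"
      by (rule clinear_comp[OF lin_SA_X lin_SM_l])
    show "clinear (\<lambda>X. tapply (\<lambda>p q. SM (SA p X) (SA q Y)) (B.T1 b c))"
      by (intro clinear_tapply_param clinear_comp[OF lin_SM_l lin_SA_X])
  qed (rule step)
qed

lemma SA_SM: "SA b (SM X (\<Sum>(c, Y)\<leftarrow>cs. SA c Y)) = (\<Sum>(c, Y)\<leftarrow>cs. tapply (\<lambda>p q. SM (SA p X) (SA q Y)) (B.T1 b c))"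
  by (simp add: clinear_sum_list[OF lin_SM_r] clinear_sum_list[OF lin_SA_X] split_def SA_SM_single)

theorem smash_module_algebra: "module_algebra mB \<Delta>B SM SA"
  unfolding module_algebra_def using SM_is_alg SM_nondeg SA_left_module SA_unital SA_SM by blast

end

theorem proposition7p2:
  fixes mA :: "'a::cvec \<Rightarrow> 'a \<Rightarrow> 'a" and \<Delta>A :: "'a comult"
    and mB :: "'b::cvec \<Rightarrow> 'b \<Rightarrow> 'b" and \<Delta>B :: "'b comult"
    and pr :: "'a \<Rightarrow> 'b \<Rightarrow> complex"
    and mR :: "'r::cvec \<Rightarrow> 'r \<Rightarrow> 'r" and act :: "'a \<Rightarrow> 'r \<Rightarrow> 'r"
  assumes "regular_mha mA \<Delta>A" and "regular_mha mB \<Delta>B"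
    and "dual_pair mA \<Delta>A mB \<Delta>B pr"
    and "module_algebra mA \<Delta>A mR act"
  shows "module_algebra mB \<Delta>B (smash_mult mA \<Delta>A mR act) (smash_act mA \<Delta>A pr)"
proof -
  interpret setting mA \<Delta>A mR act mB \<Delta>B pr
    by (unfold_locales) (use assms in \<open>simp_all add: rmha_def modA_axioms_def setting_axioms_def\<close>)
  show ?thesis by (rule smash_module_algebra)
qed


end
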